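(* Let $\alpha,\beta,\gamma\in\mathbb{R}$ with $\beta>0$, $\gamma>0$, $\alpha+\beta>0$, and let $J=J(\alpha,\beta,\gamma)$ be the self-adjoint operator in $\ell^2(\mathbb{N})$ determined by the Jacobi matrix with diagonal entries $\lambda_k=\gamma k$ and off-diagonal entries $w_k=\sqrt{\alpha+\beta k}$, $k\in\mathbb{N}$ (i.e. $(Jx)_1=\lambda_1x_1+w_1x_2$, $(Jx)_k=w_{k-1}x_{k-1}+\lambda_kx_k+w_kx_{k+1}$ for $k\ge2$). Then the spectrum of $J$ coincides with the set of zeros of the function \[ F_J(\alpha,\beta,\gamma;z)={}_1F_1\!\left(1-\frac{\alpha}{\beta}-\frac{\beta}{\gamma^2}-\frac{z}{\gamma};1-\frac{\beta}{\gamma^2}-\frac{z}{\gamma};\frac{\beta}{\gamma^2}\right)\Big/\Gamma\!\left(1-\frac{\beta}{\gamma^2}-\frac{z}{\gamma}\right). \] Moreover, if $z$ is an eigenvalue then the vector $v$ with components \[ v_k=(-1)^k\beta^{k/2}\gamma^{-k}\,\frac{\Gamma\!\left(\frac{\alpha}{\beta}+k\right)^{1/2}}{\Gamma\!\left(1-\frac{\beta}{\gamma^2}-\frac{z}{\gamma}+k\right)}\,{}_1F_1\!\left(1-\frac{\alpha}{\beta}-\frac{\beta}{\gamma^2}-\frac{z}{\gamma};1-\frac{\beta}{\gamma^2}-\frac{z}{\gamma}+k;\frac{\beta}{\gamma^2}\right),\quad k\in\mathbb{N}, \] is a corresponding eigenvector.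
   Context: ${}_1F_1(a;b;x)$ is Kummer's confluent hypergeometric function; the quotient ${}_1F_1(a;b;x)/\Gamma(b)$ is understood as its entire (regularized) extension in $b$. *)

theory Defs
  imports "HOL-Analysis.Analysis"
begin

text \<open>Indexing convention: the paper indexes by k = 1,2,...; here a sequence
  x :: nat => complex stores the paper's component x_k at position k - 1,
  i.e. position n corresponds to k = n + 1.\<close>

text \<open>Regularized Kummer function 1F1(a;b;x)/Gamma(b), written as its entire
  power series sum_n (a)_n x^n / (n! Gamma(b+n)).\<close>
definition hyp1f1_reg :: "complex \<Rightarrow> complex \<Rightarrow> complex \<Rightarrow> complex" where
  "hyp1f1_reg a b x = (\<Sum>n. pochhammer a n * rGamma (b + of_nat n) * x ^ n / fact n)"

definition l2 :: "(nat \<Rightarrow> complex) set" where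
  "l2 = {x. summable (\<lambda>n. (cmod (x n))\<^sup>2)}"

definition l2norm :: "(nat \<Rightarrow> complex) \<Rightarrow> real" where
  "l2norm x = sqrt (\<Sum>n. (cmod (x n))\<^sup>2)"

definition jac_w :: "real \<Rightarrow> real \<Rightarrow> nat \<Rightarrow> real" where
  "jac_w \<alpha> \<beta> n = sqrt (\<alpha> + \<beta> * real (Suc n))"

definition jac_lambda :: "real \<Rightarrow> nat \<Rightarrow> real" where
  "jac_lambda \<gamma> n = \<gamma> * real (Suc n)"

definition jac_op :: "real \<Rightarrow> real \<Rightarrow> real \<Rightarrow> (nat \<Rightarrow> complex) \<Rightarrow> nat \<Rightarrow> complex" where
  "jac_op \<alpha> \<beta> \<gamma> x n =
     (if n = 0 then 0 else complex_of_real (jac_w \<alpha> \<beta> (n - 1)) * x (n - 1))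
     + complex_of_real (jac_lambda \<gamma> n) * x n
     + complex_of_real (jac_w \<alpha> \<beta> n) * x (Suc n)"

text \<open>Domain of the (maximal) operator J: the self-adjoint operator determined
  by the Jacobi matrix.\<close>
definition jac_dom :: "real \<Rightarrow> real \<Rightarrow> real \<Rightarrow> (nat \<Rightarrow> complex) set" where
  "jac_dom \<alpha> \<beta> \<gamma> = {x \<in> l2. jac_op \<alpha> \<beta> \<gamma> x \<in> l2}"

definition jac_resolvent :: "real \<Rightarrow> real \<Rightarrow> real \<Rightarrow> complex set" where
  "jac_resolvent \<alpha> \<beta> \<gamma> = {z.
     (\<forall>y\<in>l2. \<exists>x\<in>jac_dom \<alpha> \<beta> \<gamma>. (\<lambda>n. jac_op \<alpha> \<beta> \<gamma> x n - z * x n) = y) \<and>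
     (\<exists>C. \<forall>x\<in>jac_dom \<alpha> \<beta> \<gamma>. l2norm x \<le> C * l2norm (\<lambda>n. jac_op \<alpha> \<beta> \<gamma> x n - z * x n))}"

definition jac_spectrum :: "real \<Rightarrow> real \<Rightarrow> real \<Rightarrow> complex set" where
  "jac_spectrum \<alpha> \<beta> \<gamma> = - jac_resolvent \<alpha> \<beta> \<gamma>"

definition jac_eigenvalue :: "real \<Rightarrow> real \<Rightarrow> real \<Rightarrow> complex \<Rightarrow> bool" where
  "jac_eigenvalue \<alpha> \<beta> \<gamma> z \<longleftrightarrow>
     (\<exists>x\<in>jac_dom \<alpha> \<beta> \<gamma>. x \<noteq> (\<lambda>_. 0) \<and> (\<forall>n. jac_op \<alpha> \<beta> \<gamma> x n = z * x n))"

definition FJ :: "real \<Rightarrow> real \<Rightarrow> real \<Rightarrow> complex \<Rightarrow> complex" where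
  "FJ \<alpha> \<beta> \<gamma> z = hyp1f1_reg
     (1 - of_real (\<alpha> / \<beta>) - of_real (\<beta> / \<gamma>\<^sup>2) - z / of_real \<gamma>)
     (1 - of_real (\<beta> / \<gamma>\<^sup>2) - z / of_real \<gamma>)
     (of_real (\<beta> / \<gamma>\<^sup>2))"

text \<open>The candidate eigenvector; position n holds the paper's v_k with k = n+1.
  Note 1F1(a;b+k;x)/Gamma(b+k) is the regularized function at b+k.\<close>
definition jac_eigvec :: "real \<Rightarrow> real \<Rightarrow> real \<Rightarrow> complex \<Rightarrow> nat \<Rightarrow> complex" where
  "jac_eigvec \<alpha> \<beta> \<gamma> z n = (let k = Suc n in
     complex_of_real ((-1) ^ k * \<beta> powr (real k / 2) / \<gamma> ^ k
                      * sqrt (Gamma (\<alpha> / \<beta> + real k)))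
     * hyp1f1_reg
         (1 - of_real (\<alpha> / \<beta>) - of_real (\<beta> / \<gamma>\<^sup>2) - z / of_real \<gamma>)
         (1 - of_real (\<beta> / \<gamma>\<^sup>2) - z / of_real \<gamma> + of_nat k)
         (of_real (\<beta> / \<gamma>\<^sup>2)))"

end

theory Submission
  imports Defs
begin



definition hterm :: "complex \<Rightarrow> complex \<Rightarrow> complex \<Rightarrow> nat \<Rightarrow> complex" where
  "hterm a b x n = pochhammer a n * rGamma (b + of_nat n) * x ^ n / fact n"

lemma hyp_def2: "hyp1f1_reg a b x = (\<Sum>n. hterm a b x n)"
  by (simp add: hyp1f1_reg_def hterm_def)

lemma rG_step: "rGamma (b + of_nat n) = (b + of_nat n) * rGamma (b + of_nat (Suc n))"
proof -
  have "b + of_nat (Suc n) = b + of_nat n + 1" by simp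
  then show ?thesis using rGamma_plus1[of "b + of_nat n"] by (simp only:)
qed

lemma rG_bound:
  assumes "Re B \<ge> 1"
  shows "norm (rGamma (B + of_nat n)) \<le> norm (rGamma B) / fact n"
proof (induction n)
  case 0 then show ?case by simp
next
  case (Suc n)
  have ge: "norm (B + of_nat n) \<ge> real n + 1"
  proof -
    have "Re (B + of_nat n) \<ge> real n + 1" using assms by simp
    also have "Re (B + of_nat n) \<le> norm (B + of_nat n)" by (rule complex_Re_le_cmod)
    finally show ?thesis by simp
  qed
  have "norm (rGamma (B + of_nat n)) = norm (B + of_nat n) * norm (rGamma (B + of_nat (Suc n)))"
    using rG_step[of B n] by (simp add: norm_mult)
  hence "norm (rGamma (B + of_nat (Suc n))) * (real n + 1) \<le> norm (rGamma (B + of_nat n))"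
    using ge by (metis mult.commute mult_left_mono norm_ge_zero)
  also have "\<dots> \<le> norm (rGamma B) / fact n" by (rule Suc.IH)
  finally have "norm (rGamma (B + of_nat (Suc n))) \<le> norm (rGamma B) / fact n / (real n + 1)"
    by (simp add: pos_le_divide_eq ac_simps)
  also have "\<dots> = norm (rGamma B) / fact (Suc n)" by (simp add: field_simps)
  finally show ?case .
qed

lemma poch_bound: "norm (pochhammer (a::complex) n) \<le> fact n * (1 + norm a) ^ n"
proof (induction n)
  case 0 then show ?case by simp
next
  case (Suc n)
  have "norm (pochhammer a (Suc n)) = norm (pochhammer a n) * norm (a + of_nat n)"
    by (simp add: pochhammer_Suc norm_mult)
  also have "\<dots> \<le> (fact n * (1 + norm a) ^ n) * ((1 + norm a) * (real n + 1))"
  proof (rule mult_mono)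
    have "norm (a + of_nat n) \<le> norm a + real n" using norm_triangle_ineq[of a "of_nat n"] by simp
    also have "\<dots> \<le> (1 + norm a) * (real n + 1)" by (simp add: algebra_simps)
    finally show "norm (a + of_nat n) \<le> (1 + norm a) * (real n + 1)" .
  qed (use Suc.IH in auto)
  also have "\<dots> = fact (Suc n) * (1 + norm a) ^ Suc n" by (simp add: algebra_simps)
  finally show ?case .
qed

lemma hterm_bound:
  assumes "Re B \<ge> 1"
  shows "norm (hterm a B x n) \<le> norm (rGamma B) * ((1 + norm a) * norm x) ^ n / fact n"
proof -
  have "norm (hterm a B x n) = norm (pochhammer a n) * norm (rGamma (B + of_nat n)) * norm x ^ n / fact n"
    by (simp add: hterm_def norm_mult norm_divide norm_power)
  also have "\<dots> \<le> (fact n * (1 + norm a) ^ n) * (norm (rGamma B) / fact n) * norm x ^ n / fact n"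
    by (intro divide_right_mono mult_right_mono mult_mono poch_bound rG_bound assms) auto
  also have "\<dots> = norm (rGamma B) * ((1 + norm a) * norm x) ^ n / fact n"
    by (simp add: power_mult_distrib)
  finally show ?thesis .
qed

lemma summable_expbound: "summable (\<lambda>n. c * (y::real) ^ n / fact n)"
proof -
  have "summable (\<lambda>n. y ^ n /\<^sub>R fact n)" by (rule summable_exp_generic)
  hence "summable (\<lambda>n. c * (y ^ n /\<^sub>R fact n))" by (rule summable_mult)
  then show ?thesis by (simp add: divide_inverse ac_simps)
qed

lemma hterm_summable: "summable (hterm a B x)"
proof -
  obtain m :: nat where m: "real m \<ge> 1 - Re B"
    using real_arch_simple by blast
  have Re: "Re (B + of_nat m) \<ge> 1" using m by simp
  define y where "y = (1 + norm a) * norm x"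
  have "norm (hterm a B x (n + m)) \<le> (norm (rGamma (B + of_nat m)) * y ^ m) * y ^ n / fact n" for n
  proof -
    have "norm (hterm a B x (n + m)) = norm (pochhammer a (n+m)) * norm (rGamma ((B + of_nat m) + of_nat n)) * norm x ^ (n+m) / fact (n+m)"
      by (simp add: hterm_def norm_mult norm_divide norm_power add_ac)
    also have "\<dots> \<le> (fact (n+m) * (1 + norm a) ^ (n+m)) * (norm (rGamma (B + of_nat m)) / fact n) * norm x ^ (n+m) / fact (n+m)"
      by (intro divide_right_mono mult_right_mono mult_mono poch_bound rG_bound Re) auto
    also have "\<dots> = (norm (rGamma (B + of_nat m)) * y ^ m) * y ^ n / fact n"
      by (simp add: y_def power_mult_distrib power_add)
    finally show ?thesis .
  qed
  hence "summable (\<lambda>n. hterm a B x (n + m))"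
    by (intro summable_comparison_test[OF _ summable_expbound]) auto
  thus ?thesis by (simp add: summable_iff_shift)
qed

lemma hyp_sums: "hterm a B x sums hyp1f1_reg a B x"
  unfolding hyp_def2 by (rule summable_sums[OF hterm_summable])

lemma hyp_bound:
  assumes "Re B \<ge> 1"
  shows "norm (hyp1f1_reg a B x) \<le> norm (rGamma B) * exp ((1 + norm a) * norm x)"
proof -
  define y where "y = (1 + norm a) * norm x"
  have s: "(\<lambda>n. norm (rGamma B) * y ^ n / fact n) sums (norm (rGamma B) * exp y)"
  proof -
    have "(\<lambda>n. y ^ n /\<^sub>R fact n) sums exp y" by (rule exp_converges)
    hence "(\<lambda>n. norm (rGamma B) * (y ^ n /\<^sub>R fact n)) sums (norm (rGamma B) * exp y)"
      by (rule sums_mult)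
    thus ?thesis by (simp add: divide_inverse ac_simps)
  qed
  have "norm (hyp1f1_reg a B x) \<le> (\<Sum>n. norm (rGamma B) * y ^ n / fact n)"
    unfolding hyp_def2
    by (rule norm_suminf_le[OF _ sums_summable[OF s]]) (use hterm_bound[OF assms] y_def in auto)
  thus ?thesis using s y_def sums_unique by fastforce
qed

lemma cmod_1_nat [simp]: "cmod (1 + complex_of_nat n) = 1 + real n"
proof -
  have "1 + complex_of_nat n = of_nat (Suc n)" by simp
  then show ?thesis by (simp only: norm_of_nat)
qed

lemma hyp_nonzero:
  assumes "Re B \<ge> 1" and "norm B > (1 + norm a) * norm x * exp ((1 + norm a) * norm x)"
  shows "hyp1f1_reg a B x \<noteq> 0"
proof -
  define y where "y = (1 + norm a) * norm x"
  have y0: "y \<ge> 0" by (simp add: y_def)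
  have Re1: "Re (B + 1) \<ge> 1" using assms by simp
  have B0: "B \<noteq> 0" using assms(1) by auto
  have rG0: "rGamma B \<noteq> 0"
  proof
    assume "rGamma B = 0"
    then have "B \<in> \<int>\<^sub>\<le>\<^sub>0" by (simp add: rGamma_eq_zero_iff)
    then obtain k :: nat where "B = - of_nat k" by (auto elim!: nonpos_Ints_cases')
    with assms(1) show False by simp
  qed
  have shift: "(\<lambda>n. hterm a B x (Suc n)) sums (hyp1f1_reg a B x - hterm a B x 0)"
    using hyp_sums[of a B x] by (simp add: sums_Suc_iff)
  have bnd: "norm (hterm a B x (Suc n)) \<le> (norm (rGamma (B + 1)) * y) * y ^ n / fact n" for n
  proof -
    have "norm (hterm a B x (Suc n)) = norm (pochhammer a (Suc n)) * norm (rGamma ((B + 1) + of_nat n)) * norm x ^ (Suc n) / fact (Suc n)"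
      by (simp add: hterm_def norm_mult norm_divide norm_power add_ac)
    also have "\<dots> \<le> (fact (Suc n) * (1 + norm a) ^ (Suc n)) * (norm (rGamma (B + 1)) / fact n) * norm x ^ (Suc n) / fact (Suc n)"
      by (intro divide_right_mono mult_right_mono mult_mono poch_bound rG_bound Re1) auto
    also have "\<dots> = (norm (rGamma (B + 1)) * y) * y ^ n / fact n"
      by (simp add: y_def power_mult_distrib)
    finally show ?thesis .
  qed
  have s: "(\<lambda>n. (norm (rGamma (B + 1)) * y) * y ^ n / fact n) sums ((norm (rGamma (B + 1)) * y) * exp y)"
  proof -
    have "(\<lambda>n. y ^ n /\<^sub>R fact n) sums exp y" by (rule exp_converges)
    hence "(\<lambda>n. (norm (rGamma (B + 1)) * y) * (y ^ n /\<^sub>R fact n)) sums ((norm (rGamma (B + 1)) * y) * exp y)"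
      by (rule sums_mult)
    thus ?thesis by (simp add: divide_inverse ac_simps)
  qed
  have "norm (hyp1f1_reg a B x - hterm a B x 0) \<le> (\<Sum>n. (norm (rGamma (B + 1)) * y) * y ^ n / fact n)"
    unfolding sums_unique[OF shift]
    by (rule norm_suminf_le[OF _ sums_summable[OF s]]) (use bnd in auto)
  also have "\<dots> = norm (rGamma (B + 1)) * y * exp y" using s sums_unique by fastforce
  also have "norm (rGamma (B + 1)) = norm (rGamma B) / norm B"
    using rGamma_plus1[of B] B0 by (metis norm_mult nonzero_eq_divide_eq norm_eq_zero mult.commute)
  finally have le: "norm (hyp1f1_reg a B x - rGamma B) \<le> norm (rGamma B) / norm B * y * exp y"
    by (simp add: hterm_def)
  have "norm (rGamma B) / norm B * y * exp y < norm (rGamma B)"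
  proof -
    have "y * exp y < norm B" using assms(2) by (simp add: y_def)
    hence "norm (rGamma B) * (y * exp y) < norm (rGamma B) * norm B"
      using rG0 by (intro mult_strict_left_mono) auto
    thus ?thesis using B0 by (simp add: field_simps)
  qed
  with le show ?thesis by auto
qed

lemma hyp_contig:
  "hyp1f1_reg a B x + (- B - x) * hyp1f1_reg a (B + 1) x + x * (B + 1 - a) * hyp1f1_reg a (B + 2) x = 0"
proof -
  define f where "f = hterm a B x"
  define g where "g = hterm a (B+1) x"
  define h where "h = hterm a (B+2) x"
  define A where "A = (\<lambda>n. f n - B * g n)"
  define C where "C = (\<lambda>n. x * ((B + 1 - a) * h n - g n))"
  have sA: "A sums (hyp1f1_reg a B x - B * hyp1f1_reg a (B + 1) x)"
    unfolding A_def f_def g_def by (intro sums_diff sums_mult hyp_sums)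
  have sC: "C sums (x * ((B + 1 - a) * hyp1f1_reg a (B + 2) x - hyp1f1_reg a (B + 1) x))"
    unfolding C_def g_def h_def by (intro sums_diff sums_mult hyp_sums)
  have A: "A n = pochhammer a n * x ^ n / fact n * of_nat n * rGamma (B + of_nat (Suc n))" for n
  proof -
    have "A n = pochhammer a n * x ^ n / fact n * (rGamma (B + of_nat n) - B * rGamma (B + 1 + of_nat n))"
      by (simp add: A_def f_def g_def hterm_def algebra_simps)
    also have "rGamma (B + of_nat n) = (B + of_nat n) * rGamma (B + of_nat (Suc n))" by (rule rG_step)
    also have "B + 1 + of_nat n = B + of_nat (Suc n)" by simp
    finally show ?thesis by (simp add: algebra_simps)
  qed
  have C: "C n = - (pochhammer a (Suc n) * x ^ (Suc n) / fact n * rGamma (B + of_nat (Suc (Suc n))))" for n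
  proof -
    have "C n = x * pochhammer a n * x ^ n / fact n * ((B + 1 - a) * rGamma (B + 2 + of_nat n) - rGamma (B + 1 + of_nat n))"
      by (simp add: C_def g_def h_def hterm_def field_simps)
    also have "rGamma (B + 1 + of_nat n) = ((B + 1) + of_nat n) * rGamma ((B + 1) + of_nat (Suc n))" by (rule rG_step)
    also have "B + 2 + of_nat n = (B + 1) + of_nat (Suc n)" by simp
    also have "(B + 1) + of_nat (Suc n) = B + of_nat (Suc (Suc n))" by simp
    finally show ?thesis by (simp add: pochhammer_Suc field_simps)
  qed
  have "(\<lambda>n. A (Suc n)) sums (hyp1f1_reg a B x - B * hyp1f1_reg a (B + 1) x)"
    using sA A[of 0] by (simp only: sums_Suc_iff) simp
  from sums_add[OF this sC] have "(\<lambda>n. A (Suc n) + C n) sums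
     (hyp1f1_reg a B x - B * hyp1f1_reg a (B + 1) x + x * ((B + 1 - a) * hyp1f1_reg a (B + 2) x - hyp1f1_reg a (B + 1) x))" .
  moreover have "(\<lambda>n. A (Suc n) + C n) = (\<lambda>_. 0)"
  proof (rule ext)
    fix n
    have nz: "(of_nat (Suc n) :: complex) \<noteq> 0" by (rule of_nat_neq_0)
    have e: "(of_nat (Suc n) :: complex) / fact (Suc n) = 1 / fact n"
      using nz by (simp add: fact_Suc del: of_nat_Suc)
    have "A (Suc n) = pochhammer a (Suc n) * x ^ Suc n * (of_nat (Suc n) / fact (Suc n)) * rGamma (B + of_nat (Suc (Suc n)))"
      unfolding A by (simp add: divide_inverse ac_simps)
    also note e
    finally show "A (Suc n) + C n = 0" unfolding C by simp
  qed
  ultimately have "hyp1f1_reg a B x - B * hyp1f1_reg a (B + 1) x + x * ((B + 1 - a) * hyp1f1_reg a (B + 2) x - hyp1f1_reg a (B + 1) x) = 0"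
    using sums_unique2[OF _ sums_zero] by simp
  thus ?thesis by (simp add: algebra_simps)
qed




lemma l2norm_nonneg: "x \<in> l2 \<Longrightarrow> l2norm x \<ge> 0"
  by (simp add: l2norm_def l2_def suminf_nonneg)

lemma sq_nonneg': "0 \<le> (cmod (x n))\<^sup>2" by simp

lemma l2_partial_bound:
  assumes "\<And>M. (\<Sum>n<M. (cmod (y n))\<^sup>2) \<le> B\<^sup>2" and "B \<ge> 0"
  shows "y \<in> l2 \<and> l2norm y \<le> B"
proof -
  have s: "summable (\<lambda>n. (cmod (y n))\<^sup>2)"
    by (rule summableI_nonneg_bounded[where x="B\<^sup>2"]) (use assms in auto)
  have "(\<Sum>n. (cmod (y n))\<^sup>2) \<le> B\<^sup>2"
    by (rule suminf_le_const[OF s]) (use assms in auto)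
  hence "l2norm y \<le> sqrt (B\<^sup>2)" unfolding l2norm_def by (rule real_sqrt_le_mono)
  with assms(2) s show ?thesis by (simp add: l2_def)
qed

lemma l2_partial_le:
  assumes "x \<in> l2"
  shows "(\<Sum>n<M. (cmod (x n))\<^sup>2) \<le> (l2norm x)\<^sup>2"
proof -
  have s: "summable (\<lambda>n. (cmod (x n))\<^sup>2)" using assms by (simp add: l2_def)
  have "(\<Sum>n<M. (cmod (x n))\<^sup>2) \<le> (\<Sum>n. (cmod (x n))\<^sup>2)"
    by (rule sum_le_suminf[OF s]) auto
  also have "\<dots> = (l2norm x)\<^sup>2" unfolding l2norm_def
    by (subst real_sqrt_pow2) (auto intro!: suminf_nonneg s)
  finally show ?thesis .
qed

lemma l2_comp_le:
  assumes "x \<in> l2" "\<And>n. cmod (y n) \<le> c * cmod (x n)" "c \<ge> 0"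
  shows "y \<in> l2 \<and> l2norm y \<le> c * l2norm x"
proof (rule l2_partial_bound)
  fix M
  have "(\<Sum>n<M. (cmod (y n))\<^sup>2) \<le> (\<Sum>n<M. c\<^sup>2 * (cmod (x n))\<^sup>2)"
  proof (rule sum_mono)
    fix n
    have "cmod (y n) \<le> c * cmod (x n)" by (rule assms)
    hence "(cmod (y n))\<^sup>2 \<le> (c * cmod (x n))\<^sup>2" by (intro power_mono) auto
    thus "(cmod (y n))\<^sup>2 \<le> c\<^sup>2 * (cmod (x n))\<^sup>2" by (simp add: power_mult_distrib)
  qed
  also have "\<dots> = c\<^sup>2 * (\<Sum>n<M. (cmod (x n))\<^sup>2)" by (simp add: sum_distrib_left)
  also have "\<dots> \<le> c\<^sup>2 * (l2norm x)\<^sup>2" by (intro mult_left_mono l2_partial_le assms) auto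
  finally show "(\<Sum>n<M. (cmod (y n))\<^sup>2) \<le> (c * l2norm x)\<^sup>2" by (simp add: power_mult_distrib)
qed (use assms l2norm_nonneg[OF assms(1)] in auto)

lemma l2_add:
  assumes "x \<in> l2" "y \<in> l2"
  shows "(\<lambda>n. x n + y n) \<in> l2 \<and> l2norm (\<lambda>n. x n + y n) \<le> l2norm x + l2norm y"
proof (rule l2_partial_bound)
  fix M
  have "L2_set (\<lambda>n. cmod (x n + y n)) {..<M} \<le> L2_set (\<lambda>n. cmod (x n) + cmod (y n)) {..<M}"
    by (rule L2_set_mono) (auto simp: norm_triangle_ineq)
  also have "\<dots> \<le> L2_set (\<lambda>n. cmod (x n)) {..<M} + L2_set (\<lambda>n. cmod (y n)) {..<M}"
    by (rule L2_set_triangle_ineq)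
  also have "L2_set (\<lambda>n. cmod (x n)) {..<M} \<le> l2norm x"
    unfolding L2_set_def using l2_partial_le[OF assms(1), of M] l2norm_nonneg[OF assms(1)]
    by (metis real_sqrt_le_mono real_sqrt_abs abs_of_nonneg)
  also have "L2_set (\<lambda>n. cmod (y n)) {..<M} \<le> l2norm y"
    unfolding L2_set_def using l2_partial_le[OF assms(2), of M] l2norm_nonneg[OF assms(2)]
    by (metis real_sqrt_le_mono real_sqrt_abs abs_of_nonneg)
  finally have "sqrt (\<Sum>n<M. (cmod (x n + y n))\<^sup>2) \<le> l2norm x + l2norm y"
    by (simp add: L2_set_def)
  thus "(\<Sum>n<M. (cmod (x n + y n))\<^sup>2) \<le> (l2norm x + l2norm y)\<^sup>2"
    by (rule sqrt_le_D)
qed (use l2norm_nonneg[OF assms(1)] l2norm_nonneg[OF assms(2)] in auto)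

lemma l2_scale:
  assumes "x \<in> l2"
  shows "(\<lambda>n. c * x n) \<in> l2 \<and> l2norm (\<lambda>n. c * x n) \<le> cmod c * l2norm x"
  by (rule l2_comp_le[OF assms]) (auto simp: norm_mult)

lemma l2_diff:
  assumes "x \<in> l2" "y \<in> l2"
  shows "(\<lambda>n. x n - y n) \<in> l2 \<and> l2norm (\<lambda>n. x n - y n) \<le> l2norm x + l2norm y"
proof -
  have "(\<lambda>n. - y n) \<in> l2 \<and> l2norm (\<lambda>n. - y n) \<le> 1 * l2norm y"
    by (rule l2_comp_le[OF assms(2)]) auto
  from l2_add[OF assms(1) conjunct1[OF this]] this show ?thesis by auto
qed

lemma l2_coord_le:
  assumes "x \<in> l2" shows "cmod (x n) \<le> l2norm x"
proof -
  have "(\<Sum>k<Suc n. (cmod (x k))\<^sup>2) \<le> (l2norm x)\<^sup>2" by (rule l2_partial_le[OF assms])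
  moreover have "(cmod (x n))\<^sup>2 \<le> (\<Sum>k<Suc n. (cmod (x k))\<^sup>2)"
    by (rule member_le_sum) auto
  ultimately have "(cmod (x n))\<^sup>2 \<le> (l2norm x)\<^sup>2" by linarith
  thus ?thesis using l2norm_nonneg[OF assms] by (simp add: abs_le_square_iff)
qed

lemma l2_zero: "x \<in> l2 \<Longrightarrow> l2norm x = 0 \<Longrightarrow> x = (\<lambda>_. 0)"
  using l2_coord_le[of x] by (auto intro!: ext)

lemma l2_shiftL:
  assumes "x \<in> l2"
  shows "(\<lambda>n. x (Suc n)) \<in> l2 \<and> l2norm (\<lambda>n. x (Suc n)) \<le> l2norm x"
proof (rule l2_partial_bound)
  fix M
  have "(\<Sum>n<M. (cmod (x (Suc n)))\<^sup>2) \<le> (\<Sum>n<Suc M. (cmod (x n))\<^sup>2)"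
    by (simp only: sum.lessThan_Suc_shift) simp
  also have "\<dots> \<le> (l2norm x)\<^sup>2" by (rule l2_partial_le[OF assms])
  finally show "(\<Sum>n<M. (cmod (x (Suc n)))\<^sup>2) \<le> (l2norm x)\<^sup>2" .
qed (use l2norm_nonneg[OF assms] in auto)

lemma l2_shiftR:
  assumes "x \<in> l2"
  shows "(\<lambda>n. if n = 0 then 0 else x (n - 1)) \<in> l2 \<and> l2norm (\<lambda>n. if n = 0 then 0 else x (n - 1)) \<le> l2norm x"
proof (rule l2_partial_bound)
  fix M
  have "(\<Sum>n<M. (cmod (if n = 0 then 0 else x (n - 1)))\<^sup>2) \<le> (\<Sum>n<Suc M. (cmod (if n = 0 then 0 else x (n - 1)))\<^sup>2)"
    by simp
  also have "\<dots> = (\<Sum>n<M. (cmod (x n))\<^sup>2)"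
    by (simp add: sum.lessThan_Suc_shift del: sum.lessThan_Suc)
  also have "\<dots> \<le> (l2norm x)\<^sup>2" by (rule l2_partial_le[OF assms])
  finally show "(\<Sum>n<M. (cmod (if n = 0 then 0 else x (n - 1)))\<^sup>2) \<le> (l2norm x)\<^sup>2" .
qed (use l2norm_nonneg[OF assms] in auto)

lemma l2_fatou:
  assumes "\<And>k. X k \<in> l2" "\<And>k. l2norm (X k) \<le> B" "\<And>n. (\<lambda>k. X k n) \<longlonglongrightarrow> x n"
  shows "x \<in> l2 \<and> l2norm x \<le> B"
proof (rule l2_partial_bound)
  fix M
  have "(\<lambda>k. \<Sum>n<M. (cmod (X k n))\<^sup>2) \<longlonglongrightarrow> (\<Sum>n<M. (cmod (x n))\<^sup>2)"
    by (intro tendsto_sum tendsto_power tendsto_norm assms)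
  moreover have "(\<Sum>n<M. (cmod (X k n))\<^sup>2) \<le> B\<^sup>2" for k
  proof -
    have "(\<Sum>n<M. (cmod (X k n))\<^sup>2) \<le> (l2norm (X k))\<^sup>2" by (rule l2_partial_le[OF assms(1)])
    also have "\<dots> \<le> B\<^sup>2" by (intro power_mono assms(2) l2norm_nonneg assms(1))
    finally show ?thesis .
  qed
  ultimately show "(\<Sum>n<M. (cmod (x n))\<^sup>2) \<le> B\<^sup>2"
    by (intro LIMSEQ_le_const2) auto
next
  show "B \<ge> 0" using assms(2)[of 0] l2norm_nonneg[OF assms(1)[of 0]] by linarith
qed

lemma l2_finite:
  assumes "\<And>n. n \<ge> M \<Longrightarrow> x n = 0"
  shows "x \<in> l2 \<and> l2norm x \<le> sqrt (\<Sum>n<M. (cmod (x n))\<^sup>2)"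
proof (rule l2_partial_bound)
  fix K
  have "(\<Sum>n<K. (cmod (x n))\<^sup>2) \<le> (\<Sum>n<M. (cmod (x n))\<^sup>2)"
  proof (cases "K \<le> M")
    case True thus ?thesis by (intro sum_mono2) auto
  next
    case False
    hence "(\<Sum>n<K. (cmod (x n))\<^sup>2) = (\<Sum>n<M. (cmod (x n))\<^sup>2) + (\<Sum>n\<in>{M..<K}. (cmod (x n))\<^sup>2)"
      by (metis le_cases lessThan_atLeast0 sum.atLeastLessThan_concat zero_le)
    also have "(\<Sum>n\<in>{M..<K}. (cmod (x n))\<^sup>2) = 0" using assms by auto
    finally show ?thesis by simp
  qed
  thus "(\<Sum>n<K. (cmod (x n))\<^sup>2) \<le> (sqrt (\<Sum>n<M. (cmod (x n))\<^sup>2))\<^sup>2"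
    by (subst real_sqrt_pow2) (auto intro: sum_nonneg)
qed (auto intro: sum_nonneg)

lemma l2_tendsto0: "x \<in> l2 \<Longrightarrow> x \<longlonglongrightarrow> 0"
proof -
  assume "x \<in> l2"
  hence "(\<lambda>n. (cmod (x n))\<^sup>2) \<longlonglongrightarrow> 0" by (intro summable_LIMSEQ_zero) (simp add: l2_def)
  hence "(\<lambda>n. cmod (x n)) \<longlonglongrightarrow> 0" by simp
  thus ?thesis by (simp add: tendsto_norm_zero_iff)
qed




definition coef :: "real \<Rightarrow> real \<Rightarrow> real \<Rightarrow> nat \<Rightarrow> real" where
  "coef \<alpha> \<beta> \<gamma> k = (-1) ^ k * \<beta> powr (real k / 2) / \<gamma> ^ k * sqrt (Gamma (\<alpha> / \<beta> + real k))"

definition pA :: "real \<Rightarrow> real \<Rightarrow> real \<Rightarrow> complex \<Rightarrow> complex" where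
  "pA \<alpha> \<beta> \<gamma> z = 1 - of_real (\<alpha> / \<beta>) - of_real (\<beta> / \<gamma>\<^sup>2) - z / of_real \<gamma>"
definition pB :: "real \<Rightarrow> real \<Rightarrow> complex \<Rightarrow> complex" where
  "pB \<beta> \<gamma> z = 1 - of_real (\<beta> / \<gamma>\<^sup>2) - z / of_real \<gamma>"
definition pX :: "real \<Rightarrow> real \<Rightarrow> complex" where
  "pX \<beta> \<gamma> = of_real (\<beta> / \<gamma>\<^sup>2)"

definition RR :: "real \<Rightarrow> real \<Rightarrow> real \<Rightarrow> complex \<Rightarrow> nat \<Rightarrow> complex" where
  "RR \<alpha> \<beta> \<gamma> z k = hyp1f1_reg (pA \<alpha> \<beta> \<gamma> z) (pB \<beta> \<gamma> z + of_nat k) (pX \<beta> \<gamma>)"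

lemma u_eq: "jac_eigvec \<alpha> \<beta> \<gamma> z n = of_real (coef \<alpha> \<beta> \<gamma> (Suc n)) * RR \<alpha> \<beta> \<gamma> z (Suc n)"
  unfolding jac_eigvec_def coef_def RR_def pA_def pB_def pX_def Let_def by simp

lemma FJ_eq: "FJ \<alpha> \<beta> \<gamma> z = RR \<alpha> \<beta> \<gamma> z 0"
  unfolding FJ_def RR_def pA_def pB_def pX_def by simp

context
  fixes \<alpha> \<beta> \<gamma> :: real
  assumes bpos: "\<beta> > 0" and gpos: "\<gamma> > 0" and abpos: "\<alpha> + \<beta> > 0"
begin

lemma c_gt: "\<alpha> / \<beta> + real k > 0" if "k \<ge> 1"
proof -
  have "\<alpha> / \<beta> > -1" using bpos abpos by (simp add: field_simps)
  thus ?thesis using that by linarith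
qed

lemma w_pos: "\<alpha> + \<beta> * real k > 0" if "k \<ge> 1"
proof -
  have "\<beta> * real k \<ge> \<beta>" using bpos that by simp
  thus ?thesis using abpos by linarith
qed

lemma coef_step:
  assumes "k \<ge> 1"
  shows "coef \<alpha> \<beta> \<gamma> (Suc k) = - (sqrt (\<alpha> + \<beta> * real k) / \<gamma>) * coef \<alpha> \<beta> \<gamma> k"
proof -
  have ck: "\<alpha> / \<beta> + real k > 0" using c_gt assms by blast
  have G: "Gamma (\<alpha> / \<beta> + real (Suc k)) = (\<alpha> / \<beta> + real k) * Gamma (\<alpha> / \<beta> + real k)"
  proof -
    have np: "\<alpha> / \<beta> + real k \<notin> \<int>\<^sub>\<le>\<^sub>0" using ck by (auto elim!: nonpos_Ints_cases)
    show ?thesis using Gamma_plus1[OF np] by (simp add: add_ac)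
  qed
  have P: "\<beta> powr (real (Suc k) / 2) = \<beta> powr (real k / 2) * sqrt \<beta>"
  proof -
    have "\<beta> powr (real (Suc k) / 2) = \<beta> powr (real k / 2 + 1/2)" by (simp add: add_divide_distrib add.commute)
    also have "\<dots> = \<beta> powr (real k / 2) * \<beta> powr (1/2)" by (rule powr_add)
    also have "\<beta> powr (1/2) = sqrt \<beta>" using bpos by (simp add: powr_half_sqrt)
    finally show ?thesis .
  qed
  have W: "sqrt (\<alpha> + \<beta> * real k) = sqrt \<beta> * sqrt (\<alpha> / \<beta> + real k)"
  proof -
    have "\<alpha> + \<beta> * real k = \<beta> * (\<alpha> / \<beta> + real k)" using bpos by (simp add: field_simps)
    thus ?thesis by (simp add: real_sqrt_mult)
  qed
  have SG: "sqrt (Gamma (\<alpha> / \<beta> + real (Suc k))) = sqrt (\<alpha> / \<beta> + real k) * sqrt (Gamma (\<alpha> / \<beta> + real k))"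
    unfolding G by (rule real_sqrt_mult)
  have "coef \<alpha> \<beta> \<gamma> (Suc k) = (-1) ^ Suc k * (\<beta> powr (real k / 2) * sqrt \<beta>) / \<gamma> ^ Suc k * (sqrt (\<alpha> / \<beta> + real k) * sqrt (Gamma (\<alpha> / \<beta> + real k)))"
    unfolding coef_def SG P ..
  also have "\<dots> = - (sqrt \<beta> * sqrt (\<alpha> / \<beta> + real k) / \<gamma>) * coef \<alpha> \<beta> \<gamma> k"
    unfolding coef_def using gpos by (simp add: field_simps)
  finally show ?thesis unfolding W .
qed

lemma coef_nz: "k \<ge> 1 \<Longrightarrow> coef \<alpha> \<beta> \<gamma> k \<noteq> 0"
proof -
  assume "k \<ge> 1"
  hence "Gamma (\<alpha> / \<beta> + real k) > 0" using c_gt[of k] by (intro Gamma_real_pos) auto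
  thus ?thesis using bpos gpos by (simp add: coef_def)
qed

lemma contig_R:
  "RR \<alpha> \<beta> \<gamma> z m + (- (pB \<beta> \<gamma> z + of_nat m) - pX \<beta> \<gamma>) * RR \<alpha> \<beta> \<gamma> z (Suc m)
   + pX \<beta> \<gamma> * (pB \<beta> \<gamma> z + of_nat m + 1 - pA \<alpha> \<beta> \<gamma> z) * RR \<alpha> \<beta> \<gamma> z (Suc (Suc m)) = 0"
  using hyp_contig[of "pA \<alpha> \<beta> \<gamma> z" "pB \<beta> \<gamma> z + of_nat m" "pX \<beta> \<gamma>"]
  unfolding RR_def by (simp add: add_ac)

lemma e1: "- (pB \<beta> \<gamma> z + of_nat k) - pX \<beta> \<gamma> = z / of_real \<gamma> - of_nat (Suc k)"
  unfolding pB_def pX_def by simp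

lemma e2: "pX \<beta> \<gamma> * (pB \<beta> \<gamma> z + of_nat k + 1 - pA \<alpha> \<beta> \<gamma> z) = of_real ((\<alpha> + \<beta> * real (Suc k)) / \<gamma>\<^sup>2)"
proof -
  have "pB \<beta> \<gamma> z + of_nat k + 1 - pA \<alpha> \<beta> \<gamma> z = of_real (\<alpha> / \<beta> + real (Suc k))"
    unfolding pB_def pA_def by simp
  thus ?thesis unfolding pX_def using bpos gpos
    by (simp only: of_real_mult[symmetric]) (simp add: field_simps)
qed

lemma coef_w1: "k \<ge> 1 \<Longrightarrow> sqrt (\<alpha> + \<beta> * real k) * coef \<alpha> \<beta> \<gamma> k = - \<gamma> * coef \<alpha> \<beta> \<gamma> (Suc k)"
  using coef_step[of k] gpos by (simp add: field_simps)

lemma coef_w2: "k \<ge> 1 \<Longrightarrow> sqrt (\<alpha> + \<beta> * real k) * coef \<alpha> \<beta> \<gamma> (Suc k) = - ((\<alpha> + \<beta> * real k) / \<gamma>) * coef \<alpha> \<beta> \<gamma> k"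
proof -
  assume k: "k \<ge> 1"
  have "sqrt (\<alpha> + \<beta> * real k) * sqrt (\<alpha> + \<beta> * real k) = \<alpha> + \<beta> * real k"
    using w_pos[OF k] by simp
  have "\<gamma> * coef \<alpha> \<beta> \<gamma> (Suc k) = - (sqrt (\<alpha> + \<beta> * real k)) * coef \<alpha> \<beta> \<gamma> k"
    using coef_step[OF k] gpos by (simp add: field_simps)
  hence "\<gamma> * (sqrt (\<alpha> + \<beta> * real k) * coef \<alpha> \<beta> \<gamma> (Suc k)) = - (sqrt (\<alpha> + \<beta> * real k) * sqrt (\<alpha> + \<beta> * real k)) * coef \<alpha> \<beta> \<gamma> k"
    by (metis mult.assoc mult.left_commute mult_minus_left)
  also note \<open>sqrt (\<alpha> + \<beta> * real k) * sqrt (\<alpha> + \<beta> * real k) = \<alpha> + \<beta> * real k\<close>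
  finally show ?thesis using gpos by (simp add: field_simps)
qed

lemma lift: "a * b = c \<Longrightarrow> complex_of_real a * (complex_of_real b * R) = complex_of_real c * R"
  by (metis of_real_mult mult.assoc)

lemma row_Suc:
  "jac_op \<alpha> \<beta> \<gamma> (jac_eigvec \<alpha> \<beta> \<gamma> z) (Suc m) = z * jac_eigvec \<alpha> \<beta> \<gamma> z (Suc m)"
proof -
  define k where "k = Suc m"
  have k1: "k \<ge> 1" by (simp add: k_def)
  define C where "C = coef \<alpha> \<beta> \<gamma> (Suc k)"
  define R where "R = RR \<alpha> \<beta> \<gamma> z"
  have h1: "complex_of_real (jac_w \<alpha> \<beta> m) * jac_eigvec \<alpha> \<beta> \<gamma> z m = - of_real \<gamma> * of_real C * R k"
    unfolding u_eq jac_w_def C_def R_def k_def[symmetric]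
    using lift[OF coef_w1[OF k1], of "R k"] by (simp add: k_def R_def)
  have h2: "complex_of_real (jac_lambda \<gamma> (Suc m)) * jac_eigvec \<alpha> \<beta> \<gamma> z (Suc m) = of_real \<gamma> * of_nat (Suc k) * of_real C * R (Suc k)"
    unfolding u_eq jac_lambda_def C_def R_def k_def by simp
  have h3: "complex_of_real (jac_w \<alpha> \<beta> (Suc m)) * jac_eigvec \<alpha> \<beta> \<gamma> z (Suc (Suc m)) = - of_real ((\<alpha> + \<beta> * real (Suc k)) / \<gamma>) * of_real C * R (Suc (Suc k))"
    unfolding u_eq jac_w_def C_def R_def k_def[symmetric]
    using lift[OF coef_w2[of "Suc k"], of "R (Suc (Suc k))"] by (simp add: k_def R_def)
  have h4: "z * jac_eigvec \<alpha> \<beta> \<gamma> z (Suc m) = z * of_real C * R (Suc k)"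
    unfolding u_eq C_def R_def k_def by simp
  have ct: "R k + (z / of_real \<gamma> - of_nat (Suc k)) * R (Suc k) + of_real ((\<alpha> + \<beta> * real (Suc k)) / \<gamma>\<^sup>2) * R (Suc (Suc k)) = 0"
    using contig_R[of z k] unfolding R_def e1 e2 .
  have "jac_op \<alpha> \<beta> \<gamma> (jac_eigvec \<alpha> \<beta> \<gamma> z) (Suc m) - z * jac_eigvec \<alpha> \<beta> \<gamma> z (Suc m)
      = - of_real \<gamma> * of_real C * R k + of_real \<gamma> * of_nat (Suc k) * of_real C * R (Suc k)
        - of_real ((\<alpha> + \<beta> * real (Suc k)) / \<gamma>) * of_real C * R (Suc (Suc k)) - z * of_real C * R (Suc k)"
    unfolding jac_op_def using h1 h2 h3 h4 by simp
  also have "\<dots> = - of_real \<gamma> * of_real C * (R k + (z / of_real \<gamma> - of_nat (Suc k)) * R (Suc k) + of_real ((\<alpha> + \<beta> * real (Suc k)) / \<gamma>\<^sup>2) * R (Suc (Suc k)))"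
    using gpos by (simp add: field_simps power2_eq_square)
  also have "\<dots> = 0" unfolding ct by simp
  finally show ?thesis by simp
qed

lemma row_0:
  "jac_op \<alpha> \<beta> \<gamma> (jac_eigvec \<alpha> \<beta> \<gamma> z) 0 - z * jac_eigvec \<alpha> \<beta> \<gamma> z 0 = of_real (\<gamma> * coef \<alpha> \<beta> \<gamma> 1) * FJ \<alpha> \<beta> \<gamma> z"
proof -
  define C where "C = coef \<alpha> \<beta> \<gamma> 1"
  define R where "R = RR \<alpha> \<beta> \<gamma> z"
  have h2: "complex_of_real (jac_lambda \<gamma> 0) * jac_eigvec \<alpha> \<beta> \<gamma> z 0 = of_real \<gamma> * of_real C * R 1"
    unfolding u_eq jac_lambda_def C_def R_def by simp
  have h3: "complex_of_real (jac_w \<alpha> \<beta> 0) * jac_eigvec \<alpha> \<beta> \<gamma> z (Suc 0) = - of_real ((\<alpha> + \<beta> * real (Suc 0)) / \<gamma>) * of_real C * R (Suc (Suc 0))"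
    unfolding u_eq jac_w_def C_def R_def
    using lift[OF coef_w2[of "Suc 0"], of "R (Suc (Suc 0))"] by (simp add: R_def)
  have h4: "z * jac_eigvec \<alpha> \<beta> \<gamma> z 0 = z * of_real C * R 1"
    unfolding u_eq C_def R_def by simp
  have ct: "R 0 + (z / of_real \<gamma> - of_nat (Suc 0)) * R (Suc 0) + of_real ((\<alpha> + \<beta> * real (Suc 0)) / \<gamma>\<^sup>2) * R (Suc (Suc 0)) = 0"
    using contig_R[of z 0] unfolding R_def e1 e2 by simp
  have "jac_op \<alpha> \<beta> \<gamma> (jac_eigvec \<alpha> \<beta> \<gamma> z) 0 - z * jac_eigvec \<alpha> \<beta> \<gamma> z 0
      = of_real \<gamma> * of_real C * R 1 - of_real ((\<alpha> + \<beta> * real (Suc 0)) / \<gamma>) * of_real C * R (Suc (Suc 0)) - z * of_real C * R 1"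
    unfolding jac_op_def using h2 h3 h4 by simp
  also have "\<dots> = of_real \<gamma> * of_real C * R 0 - of_real \<gamma> * of_real C * (R 0 + (z / of_real \<gamma> - of_nat (Suc 0)) * R (Suc 0) + of_real ((\<alpha> + \<beta> * real (Suc 0)) / \<gamma>\<^sup>2) * R (Suc (Suc 0)))"
    using gpos by (simp add: field_simps power2_eq_square)
  also have "\<dots> = of_real (\<gamma> * C) * FJ \<alpha> \<beta> \<gamma> z" by (subst ct) (simp add: FJ_eq R_def)
  finally show ?thesis unfolding C_def .
qed

end



lemma quad_le:
  fixes K L c s :: real
  assumes "K \<ge> 0" "L \<ge> 0" "c > 0" "s \<ge> (K + L) / c" "s \<ge> 1"
  shows "K + L * s \<le> c * s\<^sup>2"
proof -
  have "K + L \<le> c * s" using assms by (simp add: field_simps)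
  hence "s * (K + L) \<le> s * (c * s)" using assms by (intro mult_left_mono) auto
  moreover have "K \<le> s * K" using assms mult_right_mono[of 1 s K] by simp
  hence "K + L * s \<le> s * (K + L)" by (simp add: algebra_simps)
  ultimately show ?thesis by (simp add: power2_eq_square algebra_simps)
qed

context
  fixes \<alpha> \<beta> \<gamma> :: real
  assumes bpos: "\<beta> > 0" and gpos: "\<gamma> > 0" and abpos: "\<alpha> + \<beta> > 0"
begin

lemma u_ev_nz: "\<exists>N. \<forall>n\<ge>N. jac_eigvec \<alpha> \<beta> \<gamma> z n \<noteq> 0"
proof -
  define B where "B = pB \<beta> \<gamma> z"
  define a where "a = pA \<alpha> \<beta> \<gamma> z"
  define x where "x = pX \<beta> \<gamma>"
  define E where "E = (1 + norm a) * norm x * exp ((1 + norm a) * norm x)"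
  obtain N :: nat where N: "real N \<ge> 2 * norm B + E + 2" "real N \<ge> 0"
    using real_arch_simple by (metis of_nat_0_le_iff)
  have "E \<ge> 0" by (simp add: E_def)
  show ?thesis
  proof (intro exI allI impI)
    fix n assume n: "n \<ge> N"
    have Re1: "Re (B + of_nat (Suc n)) \<ge> 1"
    proof -
      have "1 - Re B \<le> real N" using N \<open>E \<ge> 0\<close> norm_ge_zero[of B] complex_Re_le_cmod[of "-B"] by simp
      thus ?thesis using n by simp
    qed
    have big: "norm (B + of_nat (Suc n)) > E"
    proof -
      have "norm (of_nat (Suc n) :: complex) \<le> norm (B + of_nat (Suc n)) + norm B"
        by (metis add_diff_cancel_left' norm_triangle_ineq4 add.commute)
      moreover have "real (Suc n) > E + norm B"
      proof -
        have "real n \<ge> real N" using n by simp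
        then show ?thesis using N norm_ge_zero[of B] by linarith
      qed
      ultimately show ?thesis by simp
    qed
    have "RR \<alpha> \<beta> \<gamma> z (Suc n) \<noteq> 0"
      unfolding RR_def B_def[symmetric] a_def[symmetric] x_def[symmetric]
      by (rule hyp_nonzero[OF Re1]) (use big in \<open>simp add: E_def\<close>)
    moreover have "coef \<alpha> \<beta> \<gamma> (Suc n) \<noteq> 0" by (rule coef_nz[OF bpos gpos abpos]) simp
    ultimately show "jac_eigvec \<alpha> \<beta> \<gamma> z n \<noteq> 0" by (simp add: u_eq)
  qed
qed

lemma u_l2: "jac_eigvec \<alpha> \<beta> \<gamma> z \<in> l2"
proof -
  define B where "B = pB \<beta> \<gamma> z"
  define a where "a = pA \<alpha> \<beta> \<gamma> z"
  define x where "x = pX \<beta> \<gamma>"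
  define e where "e = exp ((1 + norm a) * norm x)"
  define T where "T = (\<lambda>n. (coef \<alpha> \<beta> \<gamma> (Suc n) * cmod (rGamma (B + of_nat (Suc n))))\<^sup>2)"
  define K where "K = 2 * (\<bar>\<alpha>\<bar> + \<beta> * \<bar>Re B\<bar>)"
  define L where "L = 2 * \<beta>"
  obtain N :: nat where N: "real N \<ge> (K + L) / \<gamma>\<^sup>2 + 1 + norm B"
    using real_arch_simple by blast
  have K0: "K \<ge> 0" and L0: "L \<ge> 0" using bpos by (auto simp: K_def L_def)
  have ReN: "Re (B + of_nat (Suc n)) \<ge> 1" if "n \<ge> N" for n
  proof -
    have "real n \<ge> real N" using that by simp
    moreover have "(K + L) / \<gamma>\<^sup>2 \<ge> 0" using K0 L0 by simp
    moreover have "- norm B \<le> Re B" using complex_Re_le_cmod[of "-B"] by simp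
    ultimately show ?thesis using N by simp
  qed
  have ratio: "norm (T (Suc n)) \<le> (1/2) * norm (T n)" if n: "n \<ge> N" for n
  proof -
    define s where "s = Re B + real (Suc n)"
    have s1: "s \<ge> 1" using ReN[OF n] by (simp add: s_def)
    have sK: "s \<ge> (K + L) / \<gamma>\<^sup>2"
    proof -
      have "real n \<ge> real N" using n by simp
      moreover have "- norm B \<le> Re B" using complex_Re_le_cmod[of "-B"] by simp
      ultimately show ?thesis using N by (simp add: s_def)
    qed
    have Bnz: "B + of_nat (Suc n) \<noteq> 0"
    proof
      assume "B + of_nat (Suc n) = 0"
      hence "Re (B + of_nat (Suc n)) = 0" by simp
      with ReN[OF n] show False by simp
    qed
    have ns: "norm (B + of_nat (Suc n)) \<ge> s"
      unfolding s_def using complex_Re_le_cmod[of "B + of_nat (Suc n)"] by simp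
    have q: "K + L * s \<le> \<gamma>\<^sup>2 * s\<^sup>2" by (rule quad_le[OF K0 L0 _ sK s1]) (use gpos in simp)
    have w: "2 * (\<alpha> + \<beta> * real (Suc n)) \<le> K + L * s"
    proof -
      have "\<beta> * real (Suc n) = \<beta> * s - \<beta> * Re B" by (simp add: s_def algebra_simps)
      moreover have "- (\<beta> * Re B) \<le> \<beta> * \<bar>Re B\<bar>" using bpos
        by (metis abs_ge_minus_self abs_mult abs_of_pos minus_mult_right)
      ultimately show ?thesis unfolding K_def L_def by simp
    qed
    have "s\<^sup>2 \<le> (norm (B + of_nat (Suc n)))\<^sup>2" using ns s1 by (intro power_mono) auto
    hence main: "2 * (\<alpha> + \<beta> * real (Suc n)) \<le> \<gamma>\<^sup>2 * (norm (B + of_nat (Suc n)))\<^sup>2"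
      using q w gpos by (smt (verit) mult_left_mono zero_le_power2)
    have cs: "(coef \<alpha> \<beta> \<gamma> (Suc (Suc n)))\<^sup>2 = (\<alpha> + \<beta> * real (Suc n)) / \<gamma>\<^sup>2 * (coef \<alpha> \<beta> \<gamma> (Suc n))\<^sup>2"
    proof -
      have "(sqrt (\<alpha> + \<beta> * real (Suc n)))\<^sup>2 = \<alpha> + \<beta> * real (Suc n)"
        using w_pos[OF bpos gpos abpos, of "Suc n"] by simp
      thus ?thesis using coef_step[OF bpos gpos abpos, of "Suc n"]
        by (simp add: power_mult_distrib power_divide)
    qed
    have rg: "cmod (rGamma (B + of_nat (Suc (Suc n)))) = cmod (rGamma (B + of_nat (Suc n))) / norm (B + of_nat (Suc n))"
    proof -
      have "rGamma (B + of_nat (Suc n)) = (B + of_nat (Suc n)) * rGamma (B + of_nat (Suc (Suc n)))"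
        by (rule rG_step)
      thus ?thesis using Bnz by (simp add: norm_mult)
    qed
    have "T (Suc n) = ((\<alpha> + \<beta> * real (Suc n)) / (\<gamma>\<^sup>2 * (norm (B + of_nat (Suc n)))\<^sup>2)) * T n"
      unfolding T_def power_mult_distrib cs rg using Bnz by (simp add: field_simps power2_eq_square)
    also have "(\<alpha> + \<beta> * real (Suc n)) / (\<gamma>\<^sup>2 * (norm (B + of_nat (Suc n)))\<^sup>2) \<le> 1/2"
      using main Bnz gpos by (simp add: field_simps)
    hence "((\<alpha> + \<beta> * real (Suc n)) / (\<gamma>\<^sup>2 * (norm (B + of_nat (Suc n)))\<^sup>2)) * T n \<le> 1/2 * T n"
      by (intro mult_right_mono) (auto simp: T_def)
    finally show ?thesis by (simp add: T_def)
  qed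
  have sT: "summable T" by (rule summable_ratio_test[where c="1/2" and N=N]) (use ratio in auto)
  have bnd: "norm ((cmod (jac_eigvec \<alpha> \<beta> \<gamma> z n))\<^sup>2) \<le> e\<^sup>2 * T n" if n: "n \<ge> N" for n
  proof -
    have "cmod (RR \<alpha> \<beta> \<gamma> z (Suc n)) \<le> cmod (rGamma (B + of_nat (Suc n))) * e"
      unfolding RR_def B_def[symmetric] a_def[symmetric] x_def[symmetric] e_def
      by (rule hyp_bound[OF ReN[OF n]])
    hence "cmod (jac_eigvec \<alpha> \<beta> \<gamma> z n) \<le> \<bar>coef \<alpha> \<beta> \<gamma> (Suc n)\<bar> * (cmod (rGamma (B + of_nat (Suc n))) * e)"
      unfolding u_eq by (simp add: norm_mult mult_left_mono)
    hence "(cmod (jac_eigvec \<alpha> \<beta> \<gamma> z n))\<^sup>2 \<le> (\<bar>coef \<alpha> \<beta> \<gamma> (Suc n)\<bar> * (cmod (rGamma (B + of_nat (Suc n))) * e))\<^sup>2"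
      by (intro power_mono) auto
    thus ?thesis by (simp add: T_def power_mult_distrib ac_simps)
  qed
  have "summable (\<lambda>n. e\<^sup>2 * T n)" using sT by (rule summable_mult)
  hence "summable (\<lambda>n. (cmod (jac_eigvec \<alpha> \<beta> \<gamma> z n))\<^sup>2)"
    by (rule summable_comparison_test[rotated]) (use bnd in blast)
  thus ?thesis by (simp add: l2_def)
qed

end



definition dd :: "real \<Rightarrow> complex \<Rightarrow> nat \<Rightarrow> complex" where
  "dd \<gamma> z n = complex_of_real (jac_lambda \<gamma> n) - z"

definition res :: "real \<Rightarrow> real \<Rightarrow> real \<Rightarrow> complex \<Rightarrow> (nat \<Rightarrow> complex) \<Rightarrow> nat \<Rightarrow> complex" where
  "res \<alpha> \<beta> \<gamma> z x n = jac_op \<alpha> \<beta> \<gamma> x n - z * x n"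

definition TC :: "real \<Rightarrow> real \<Rightarrow> real \<Rightarrow> complex \<Rightarrow> nat \<Rightarrow> bool" where
  "TC \<alpha> \<beta> \<gamma> z N \<longleftrightarrow> (\<forall>n\<ge>N. 1 \<le> cmod (dd \<gamma> z n) \<and> 4 * jac_w \<alpha> \<beta> n \<le> cmod (dd \<gamma> z n))"

lemma res_eq: "res \<alpha> \<beta> \<gamma> z x n = (if n = 0 then 0 else complex_of_real (jac_w \<alpha> \<beta> (n - 1)) * x (n - 1))
     + dd \<gamma> z n * x n + complex_of_real (jac_w \<alpha> \<beta> n) * x (Suc n)"
  unfolding res_def jac_op_def dd_def by (simp add: algebra_simps)

lemma res_lin: "res \<alpha> \<beta> \<gamma> z (\<lambda>n. a n - c * b n) n = res \<alpha> \<beta> \<gamma> z a n - c * res \<alpha> \<beta> \<gamma> z b n"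
  unfolding res_eq by (simp add: algebra_simps)

lemma res_diff: "res \<alpha> \<beta> \<gamma> z (\<lambda>n. a n - b n) n = res \<alpha> \<beta> \<gamma> z a n - res \<alpha> \<beta> \<gamma> z b n"
  unfolding res_eq by (simp add: algebra_simps)

lemma TC_mono: "TC \<alpha> \<beta> \<gamma> z N \<Longrightarrow> N \<le> N' \<Longrightarrow> TC \<alpha> \<beta> \<gamma> z N'"
  unfolding TC_def by auto

context
  fixes \<alpha> \<beta> \<gamma> :: real
  assumes bpos: "\<beta> > 0" and gpos: "\<gamma> > 0" and abpos: "\<alpha> + \<beta> > 0"
begin

lemma jw_pos: "jac_w \<alpha> \<beta> n > 0"
  unfolding jac_w_def using w_pos[OF bpos gpos abpos, of "Suc n"] by simp

lemma jw_mono: "m \<le> n \<Longrightarrow> jac_w \<alpha> \<beta> m \<le> jac_w \<alpha> \<beta> n"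
  unfolding jac_w_def using bpos by (intro real_sqrt_le_mono) (simp add: mult_left_mono)

lemma TC_exists: "\<exists>N. TC \<alpha> \<beta> \<gamma> z N"
proof -
  define K where "K = 16 * (\<bar>\<alpha>\<bar> + \<beta> * cmod z / \<gamma>)"
  define L where "L = 16 * \<beta> / \<gamma>"
  have K0: "K \<ge> 0" and L0: "L \<ge> 0" using bpos gpos by (auto simp: K_def L_def)
  obtain N :: nat where N: "real N \<ge> (cmod z + K + L + 1) / \<gamma>"
    using real_arch_simple by blast
  show ?thesis unfolding TC_def
  proof (intro exI allI impI conjI)
    fix n assume n: "n \<ge> N"
    define t where "t = \<gamma> * real (Suc n) - cmod z"
    have "\<gamma> * real (Suc n) \<ge> \<gamma> * real N" using n gpos by (intro mult_left_mono) auto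
    moreover have "\<gamma> * real N \<ge> cmod z + K + L + 1" using N gpos by (simp add: field_simps)
    ultimately have tb: "t \<ge> K + L + 1" unfolding t_def by linarith
    have dt: "cmod (dd \<gamma> z n) \<ge> t"
    proof -
      have "cmod (complex_of_real (jac_lambda \<gamma> n)) \<le> cmod (dd \<gamma> z n) + cmod z"
      proof -
        have "complex_of_real (jac_lambda \<gamma> n) = dd \<gamma> z n + z" by (simp add: dd_def)
        thus ?thesis using norm_triangle_ineq[of "dd \<gamma> z n" z] by simp
      qed
      moreover have "cmod (complex_of_real (jac_lambda \<gamma> n)) = \<gamma> * real (Suc n)"
        unfolding jac_lambda_def using gpos by (simp only: norm_of_real) simp
      ultimately show ?thesis unfolding t_def by linarith
    qed
    show "1 \<le> cmod (dd \<gamma> z n)" using dt tb K0 L0 by linarith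
    have q: "K + L * t \<le> 1 * t\<^sup>2" by (rule quad_le[OF K0 L0]) (use tb K0 L0 in auto)
    have "16 * (\<alpha> + \<beta> * real (Suc n)) \<le> K + L * t"
    proof -
      have "\<beta> * real (Suc n) = \<beta> * (t + cmod z) / \<gamma>" using gpos by (simp add: t_def field_simps)
      hence "16 * (\<alpha> + \<beta> * real (Suc n)) = 16 * \<alpha> + 16 * \<beta> * cmod z / \<gamma> + L * t"
        unfolding L_def by (simp add: field_simps add_divide_distrib)
      thus ?thesis unfolding K_def by (simp add: algebra_simps)
    qed
    with q have "16 * (\<alpha> + \<beta> * real (Suc n)) \<le> t\<^sup>2" by simp
    hence "sqrt (16 * (\<alpha> + \<beta> * real (Suc n))) \<le> sqrt (t\<^sup>2)" by (rule real_sqrt_le_mono)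
    moreover have "sqrt (16 * (\<alpha> + \<beta> * real (Suc n))) = 4 * jac_w \<alpha> \<beta> n"
    proof -
      have "sqrt (16 * (\<alpha> + \<beta> * real (Suc n))) = sqrt (4\<^sup>2) * sqrt (\<alpha> + \<beta> * real (Suc n))"
        by (simp only: real_sqrt_mult[symmetric]) simp
      thus ?thesis unfolding jac_w_def by (simp only: real_sqrt_abs)
    qed
    moreover have "sqrt (t\<^sup>2) = t" using tb K0 L0 by simp
    ultimately show "4 * jac_w \<alpha> \<beta> n \<le> cmod (dd \<gamma> z n)" using dt by linarith
  qed
qed

lemma max_principle:
  assumes h: "h \<in> l2" and N1: "N \<ge> 1" and tc: "TC \<alpha> \<beta> \<gamma> z N" and h0: "h (N - 1) = 0"
    and rows: "\<And>n. n \<ge> N \<Longrightarrow> res \<alpha> \<beta> \<gamma> z h n = 0"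
  shows "\<forall>n\<ge>N. h n = 0"
proof (rule ccontr)
  assume "\<not> (\<forall>n\<ge>N. h n = 0)"
  then obtain m where m: "m \<ge> N" "h m \<noteq> 0" by auto
  define e where "e = cmod (h m)"
  have e0: "e > 0" using m by (simp add: e_def)
  have "eventually (\<lambda>n. cmod (h n) < e) sequentially"
  proof -
    have "(\<lambda>n. cmod (h n)) \<longlonglongrightarrow> 0" using tendsto_norm_zero[OF l2_tendsto0[OF h]] .
    thus ?thesis using order_tendstoD(2)[OF _ e0] by blast
  qed
  then obtain M where M: "\<And>n. n \<ge> M \<Longrightarrow> cmod (h n) < e" by (auto simp: eventually_sequentially)
  define S where "S = {n. N \<le> n \<and> e \<le> cmod (h n)}"
  have finS: "finite S"
  proof (rule finite_subset[of S "{..M}"])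
    show "S \<subseteq> {..M}"
    proof
      fix n assume "n \<in> S"
      hence "e \<le> cmod (h n)" by (simp add: S_def)
      hence "\<not> M \<le> n \<or> n = M" using M by (metis not_le)
      thus "n \<in> {..M}" by auto
    qed
  qed auto
  have mS: "m \<in> S" using m by (simp add: S_def e_def)
  define v where "v = Max ((\<lambda>n. cmod (h n)) ` S)"
  have vin: "v \<in> (\<lambda>n. cmod (h n)) ` S" unfolding v_def using finS mS by (intro Max_in) auto
  then obtain n0 where n0S: "n0 \<in> S" and v: "v = cmod (h n0)" by auto
  have maxS: "cmod (h n) \<le> v" if "n \<in> S" for n unfolding v_def using finS that by (intro Max_ge) auto
  have ve: "v \<ge> e" using n0S v by (simp add: S_def)
  have bound: "cmod (h n) \<le> v" if "n \<ge> N - 1" for n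
  proof (cases "n \<in> S")
    case True thus ?thesis by (rule maxS)
  next
    case False
    show ?thesis
    proof (cases "n \<ge> N")
      case True with False have "cmod (h n) < e" by (simp add: S_def)
      thus ?thesis using ve by simp
    next
      case False with that have "n = N - 1" by simp
      thus ?thesis using h0 ve e0 by simp
    qed
  qed
  have n0N: "n0 \<ge> N" using n0S by (simp add: S_def)
  hence n0pos: "n0 \<noteq> 0" using N1 by simp
  have r: "res \<alpha> \<beta> \<gamma> z h n0 = 0" by (rule rows[OF n0N])
  hence eq: "dd \<gamma> z n0 * h n0 = - (complex_of_real (jac_w \<alpha> \<beta> (n0 - 1)) * h (n0 - 1) + complex_of_real (jac_w \<alpha> \<beta> n0) * h (Suc n0))"
    unfolding res_eq using n0pos by (simp add: algebra_simps eq_neg_iff_add_eq_0)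
  have w1: "jac_w \<alpha> \<beta> (n0 - 1) \<le> jac_w \<alpha> \<beta> n0" by (rule jw_mono) simp
  have tcn: "1 \<le> cmod (dd \<gamma> z n0)" "4 * jac_w \<alpha> \<beta> n0 \<le> cmod (dd \<gamma> z n0)" using tc n0N by (auto simp: TC_def)
  have wpos: "jac_w \<alpha> \<beta> (n0 - 1) > 0" "jac_w \<alpha> \<beta> n0 > 0" using jw_pos by auto
  have "cmod (dd \<gamma> z n0) * v = cmod (dd \<gamma> z n0 * h n0)" by (simp add: v norm_mult)
  also have "\<dots> \<le> jac_w \<alpha> \<beta> (n0 - 1) * cmod (h (n0 - 1)) + jac_w \<alpha> \<beta> n0 * cmod (h (Suc n0))"
    unfolding eq norm_minus_cancel using wpos
      norm_triangle_ineq[of "complex_of_real (jac_w \<alpha> \<beta> (n0 - 1)) * h (n0 - 1)" "complex_of_real (jac_w \<alpha> \<beta> n0) * h (Suc n0)"]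
    by (simp add: norm_mult)
  also have "\<dots> \<le> jac_w \<alpha> \<beta> (n0 - 1) * v + jac_w \<alpha> \<beta> n0 * v"
    using wpos bound[of "n0 - 1"] bound[of "Suc n0"] n0N
    by (intro add_mono mult_left_mono) auto
  also have "\<dots> \<le> (cmod (dd \<gamma> z n0) / 2) * v"
  proof -
    have "jac_w \<alpha> \<beta> (n0 - 1) + jac_w \<alpha> \<beta> n0 \<le> cmod (dd \<gamma> z n0) / 2" using w1 tcn by linarith
    hence "(jac_w \<alpha> \<beta> (n0 - 1) + jac_w \<alpha> \<beta> n0) * v \<le> (cmod (dd \<gamma> z n0) / 2) * v"
      using ve e0 by (intro mult_right_mono) auto
    thus ?thesis by (simp add: algebra_simps)
  qed
  finally have "cmod (dd \<gamma> z n0) * v \<le> cmod (dd \<gamma> z n0) / 2 * v" .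
  moreover have "v > 0" using ve e0 by simp
  ultimately show False using tcn by (simp add: field_simps)
qed

end



context
  fixes \<alpha> \<beta> \<gamma> :: real and z :: complex and N :: nat
  assumes bpos: "\<beta> > 0" and gpos: "\<gamma> > 0" and abpos: "\<alpha> + \<beta> > 0"
    and tc: "TC \<alpha> \<beta> \<gamma> z N" and N1: "N \<ge> 1"
begin

definition Kop :: "(nat \<Rightarrow> complex) \<Rightarrow> nat \<Rightarrow> complex" where
  "Kop s n = (if n < N then 0 else - ((if N < n then of_real (jac_w \<alpha> \<beta> (n - 1)) / dd \<gamma> z (n - 1) * s (n - 1) else 0)
       + of_real (jac_w \<alpha> \<beta> n) / dd \<gamma> z (Suc n) * s (Suc n)))"

lemma dd_ge: "n \<ge> N \<Longrightarrow> 1 \<le> cmod (dd \<gamma> z n)"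
  using tc by (auto simp: TC_def)

lemma dd_nz: assumes "n \<ge> N" shows "dd \<gamma> z n \<noteq> 0"
proof
  assume "dd \<gamma> z n = 0"
  with dd_ge[OF assms] show False by simp
qed

lemma wd_le: "n \<ge> N \<Longrightarrow> m \<le> n \<Longrightarrow> cmod (of_real (jac_w \<alpha> \<beta> m) / dd \<gamma> z n) \<le> 1/4"
proof -
  assume n: "n \<ge> N" and m: "m \<le> n"
  have "jac_w \<alpha> \<beta> m \<le> jac_w \<alpha> \<beta> n" by (rule jw_mono[OF bpos gpos abpos m])
  moreover have "4 * jac_w \<alpha> \<beta> n \<le> cmod (dd \<gamma> z n)" using tc n by (auto simp: TC_def)
  ultimately have "4 * jac_w \<alpha> \<beta> m \<le> cmod (dd \<gamma> z n)" by linarith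
  moreover have "cmod (dd \<gamma> z n) > 0" using dd_ge[OF n] by linarith
  moreover have "jac_w \<alpha> \<beta> m > 0" by (rule jw_pos[OF bpos gpos abpos])
  ultimately show ?thesis by (simp add: norm_divide field_simps)
qed

lemma Kop_l2:
  assumes s: "s \<in> l2"
  shows "Kop s \<in> l2 \<and> l2norm (Kop s) \<le> 1/2 * l2norm s"
proof -
  define A where "A = (\<lambda>n. if n < N then 0 else if N < n then of_real (jac_w \<alpha> \<beta> (n - 1)) / dd \<gamma> z (n - 1) * s (n - 1) else 0)"
  define B where "B = (\<lambda>n. if n < N then 0 else of_real (jac_w \<alpha> \<beta> n) / dd \<gamma> z (Suc n) * s (Suc n))"
  have sR: "(\<lambda>n. if n = 0 then 0 else s (n - 1)) \<in> l2 \<and> l2norm (\<lambda>n. if n = 0 then 0 else s (n - 1)) \<le> l2norm s"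
    by (rule l2_shiftR[OF s])
  have sL: "(\<lambda>n. s (Suc n)) \<in> l2 \<and> l2norm (\<lambda>n. s (Suc n)) \<le> l2norm s"
    by (rule l2_shiftL[OF s])
  have A: "A \<in> l2 \<and> l2norm A \<le> 1/4 * l2norm (\<lambda>n. if n = 0 then 0 else s (n - 1))"
  proof (rule l2_comp_le[OF conjunct1[OF sR]])
    fix n
    show "cmod (A n) \<le> 1/4 * cmod (if n = 0 then 0 else s (n - 1))"
    proof (cases "N < n")
      case True
      hence "cmod (of_real (jac_w \<alpha> \<beta> (n - 1)) / dd \<gamma> z (n - 1)) \<le> 1/4" by (intro wd_le) auto
      hence "cmod (of_real (jac_w \<alpha> \<beta> (n - 1)) / dd \<gamma> z (n - 1)) * cmod (s (n - 1)) \<le> 1/4 * cmod (s (n - 1))"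
        by (intro mult_right_mono) auto
      moreover have "A n = (of_real (jac_w \<alpha> \<beta> (n - 1)) / dd \<gamma> z (n - 1)) * s (n - 1)" using True by (simp add: A_def)
      hence "cmod (A n) = cmod (of_real (jac_w \<alpha> \<beta> (n - 1)) / dd \<gamma> z (n - 1)) * cmod (s (n - 1))"
        by (simp only: norm_mult)
      ultimately show ?thesis using True by simp
    qed (auto simp: A_def)
  qed simp
  have B: "B \<in> l2 \<and> l2norm B \<le> 1/4 * l2norm (\<lambda>n. s (Suc n))"
  proof (rule l2_comp_le[OF conjunct1[OF sL]])
    fix n
    show "cmod (B n) \<le> 1/4 * cmod (s (Suc n))"
    proof (cases "n < N")
      case False
      hence "cmod (of_real (jac_w \<alpha> \<beta> n) / dd \<gamma> z (Suc n)) \<le> 1/4" by (intro wd_le) auto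
      hence "cmod (of_real (jac_w \<alpha> \<beta> n) / dd \<gamma> z (Suc n)) * cmod (s (Suc n)) \<le> 1/4 * cmod (s (Suc n))"
        by (intro mult_right_mono) auto
      moreover have "B n = (of_real (jac_w \<alpha> \<beta> n) / dd \<gamma> z (Suc n)) * s (Suc n)" using False by (simp add: B_def)
      hence "cmod (B n) = cmod (of_real (jac_w \<alpha> \<beta> n) / dd \<gamma> z (Suc n)) * cmod (s (Suc n))"
        by (simp only: norm_mult)
      ultimately show ?thesis by simp
    qed (auto simp: B_def)
  qed simp
  have AB: "(\<lambda>n. A n + B n) \<in> l2 \<and> l2norm (\<lambda>n. A n + B n) \<le> l2norm A + l2norm B"
    by (rule l2_add) (use A B in auto)
  have K: "Kop s = (\<lambda>n. - (A n + B n))"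
    by (rule ext) (simp add: Kop_def A_def B_def)
  have "Kop s \<in> l2 \<and> l2norm (Kop s) \<le> 1 * l2norm (\<lambda>n. A n + B n)"
    unfolding K by (rule l2_comp_le[OF conjunct1[OF AB]]) (auto simp: minus_add_distrib[symmetric] simp del: minus_add_distrib)
  moreover have "l2norm (\<lambda>n. A n + B n) \<le> 1/2 * l2norm s"
    using AB A B sR sL by linarith
  ultimately show ?thesis by simp
qed

lemma Kop_diff: "Kop (\<lambda>n. a n - b n) n = Kop a n - Kop b n"
  unfolding Kop_def by (auto simp: right_diff_distrib)

lemma Kop_tendsto:
  assumes "\<And>n. (\<lambda>k. X k n) \<longlonglongrightarrow> s n"
  shows "(\<lambda>k. Kop (X k) n) \<longlonglongrightarrow> Kop s n"
proof -
  have a: "N < n \<Longrightarrow> dd \<gamma> z (n - 1) \<noteq> 0" by (rule dd_nz) simp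
  have b: "\<not> n < N \<Longrightarrow> dd \<gamma> z (Suc n) \<noteq> 0" by (rule dd_nz) simp
  show ?thesis
    unfolding Kop_def by (cases "n < N"; cases "N < n") (use a b in \<open>auto intro!: tendsto_intros assms\<close>)
qed

definition ycut :: "(nat \<Rightarrow> complex) \<Rightarrow> nat \<Rightarrow> complex" where
  "ycut y n = (if N \<le> n then y n else 0)"

primrec Sit :: "(nat \<Rightarrow> complex) \<Rightarrow> nat \<Rightarrow> nat \<Rightarrow> complex" where
  "Sit y 0 = ycut y"
| "Sit y (Suc k) = (\<lambda>n. ycut y n + Kop (Sit y k) n)"

lemma ycut_l2: "y \<in> l2 \<Longrightarrow> ycut y \<in> l2 \<and> l2norm (ycut y) \<le> 1 * l2norm y"
  by (rule l2_comp_le) (auto simp: ycut_def)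

lemma Sit_l2: assumes y: "y \<in> l2" shows "Sit y k \<in> l2 \<and> l2norm (Sit y k) \<le> 2 * l2norm y"
proof (induction k)
  case 0 thus ?case using ycut_l2[OF y] l2norm_nonneg[OF y] by simp
next
  case (Suc k)
  have K: "Kop (Sit y k) \<in> l2 \<and> l2norm (Kop (Sit y k)) \<le> 1/2 * l2norm (Sit y k)"
    using Kop_l2 Suc.IH by blast
  have "(\<lambda>n. ycut y n + Kop (Sit y k) n) \<in> l2 \<and> l2norm (\<lambda>n. ycut y n + Kop (Sit y k) n) \<le> l2norm (ycut y) + l2norm (Kop (Sit y k))"
    by (rule l2_add) (use ycut_l2[OF y] K in auto)
  thus ?case using ycut_l2[OF y] K Suc.IH by simp
qed

definition Dd :: "(nat \<Rightarrow> complex) \<Rightarrow> nat \<Rightarrow> nat \<Rightarrow> complex" where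
  "Dd y k = (\<lambda>n. Sit y (Suc k) n - Sit y k n)"

lemma Dd_Suc: "Dd y (Suc k) = Kop (Dd y k)"
  by (rule ext) (simp add: Dd_def Kop_diff)

lemma Dd_l2: assumes y: "y \<in> l2" shows "Dd y k \<in> l2 \<and> l2norm (Dd y k) \<le> (1/2) ^ k * (4 * l2norm y)"
proof (induction k)
  case 0
  have "Dd y 0 \<in> l2 \<and> l2norm (Dd y 0) \<le> l2norm (Sit y (Suc 0)) + l2norm (Sit y 0)"
    unfolding Dd_def by (rule l2_diff) (use Sit_l2[OF y] in blast)+
  thus ?case using Sit_l2[OF y, of "Suc 0"] Sit_l2[OF y, of 0] by simp
next
  case (Suc k)
  have "Kop (Dd y k) \<in> l2 \<and> l2norm (Kop (Dd y k)) \<le> 1/2 * l2norm (Dd y k)"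
    using Kop_l2 Suc.IH by blast
  moreover have "1/2 * l2norm (Dd y k) \<le> 1/2 * ((1/2) ^ k * (4 * l2norm y))" using Suc.IH by (intro mult_left_mono) auto
  moreover have "1/2 * ((1/2) ^ k * (4 * l2norm y)) = (1/2) ^ Suc k * (4 * l2norm y)" by simp
  ultimately show ?case unfolding Dd_Suc by linarith
qed

lemma Sit_tel: "Sit y k n = ycut y n + (\<Sum>j<k. Dd y j n)"
  by (induction k) (simp_all add: Dd_def)

definition sol :: "(nat \<Rightarrow> complex) \<Rightarrow> nat \<Rightarrow> complex" where
  "sol y n = ycut y n + (\<Sum>j. Dd y j n)"

lemma Sit_conv: assumes y: "y \<in> l2" shows "(\<lambda>k. Sit y k n) \<longlonglongrightarrow> sol y n"
proof -
  have b: "norm (Dd y j n) \<le> (4 * l2norm y) * (1/2) ^ j" for j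
    using l2_coord_le[OF conjunct1[OF Dd_l2[OF y, of j]], of n] Dd_l2[OF y, of j] by (simp add: ac_simps)
  have "summable (\<lambda>j. (4 * l2norm y) * (1/2::real) ^ j)"
    by (intro summable_mult summable_geometric) simp
  hence "summable (\<lambda>j. Dd y j n)" by (rule summable_comparison_test[rotated]) (use b in auto)
  hence "(\<lambda>k. \<Sum>j<k. Dd y j n) \<longlonglongrightarrow> (\<Sum>j. Dd y j n)" by (rule summable_LIMSEQ)
  hence "(\<lambda>k. ycut y n + (\<Sum>j<k. Dd y j n)) \<longlonglongrightarrow> ycut y n + (\<Sum>j. Dd y j n)" by (intro tendsto_intros)
  thus ?thesis unfolding Sit_tel sol_def .
qed

lemma sol_l2: assumes y: "y \<in> l2" shows "sol y \<in> l2 \<and> l2norm (sol y) \<le> 2 * l2norm y"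
  by (rule l2_fatou[where X="Sit y"]) (use Sit_l2[OF y] Sit_conv[OF y] in auto)

lemma sol_eq: assumes y: "y \<in> l2" shows "sol y n = ycut y n + Kop (sol y) n"
proof -
  have "(\<lambda>k. Sit y (Suc k) n) \<longlonglongrightarrow> sol y n" using Sit_conv[OF y] by (rule LIMSEQ_Suc)
  moreover have "(\<lambda>k. Sit y (Suc k) n) \<longlonglongrightarrow> ycut y n + Kop (sol y) n"
    unfolding Sit.simps by (intro tendsto_intros Kop_tendsto Sit_conv[OF y])
  ultimately show ?thesis by (rule LIMSEQ_unique)
qed

lemma tail_exists:
  assumes y: "y \<in> l2"
  shows "\<exists>t. t \<in> l2 \<and> (\<forall>n<N. t n = 0) \<and> (\<forall>n\<ge>N. res \<alpha> \<beta> \<gamma> z t n = y n) \<and> l2norm t \<le> 2 * l2norm y"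
proof -
  define s where "s = sol y"
  define t where "t = (\<lambda>n. if N \<le> n then s n / dd \<gamma> z n else 0)"
  have sl: "s \<in> l2 \<and> l2norm s \<le> 2 * l2norm y" unfolding s_def by (rule sol_l2[OF y])
  have tl: "t \<in> l2 \<and> l2norm t \<le> 1 * l2norm s"
  proof (rule l2_comp_le[OF conjunct1[OF sl]])
    fix n show "cmod (t n) \<le> 1 * cmod (s n)"
    proof (cases "N \<le> n")
      case True
      have "cmod (s n) / cmod (dd \<gamma> z n) \<le> cmod (s n) / 1"
        using dd_ge[OF True] by (intro divide_left_mono) auto
      thus ?thesis using True by (simp add: t_def norm_divide)
    qed (simp add: t_def)
  qed simp
  have rows: "res \<alpha> \<beta> \<gamma> z t n = y n" if n: "N \<le> n" for n
  proof -
    have n0: "n \<noteq> 0" using n N1 by simp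
    have e: "s n = y n + Kop s n" using sol_eq[OF y, of n] n by (simp add: s_def ycut_def)
    have t1: "dd \<gamma> z n * t n = s n" using dd_nz[OF n] n unfolding t_def by simp
    have t2: "t (Suc n) = s (Suc n) / dd \<gamma> z (Suc n)" using n by (simp add: t_def)
    have t3: "t (n - 1) = (if N < n then s (n - 1) / dd \<gamma> z (n - 1) else 0)" using n n0 N1 by (auto simp: t_def)
    have "res \<alpha> \<beta> \<gamma> z t n = s n - Kop s n"
      unfolding res_eq using n0 n t1 t2 t3 by (simp add: Kop_def)
    thus ?thesis using e by simp
  qed
  show ?thesis
    by (rule exI[of _ t]) (use tl sl rows in \<open>auto simp: t_def\<close>)
qed

end



fun bs :: "real \<Rightarrow> real \<Rightarrow> real \<Rightarrow> complex \<Rightarrow> nat \<Rightarrow> (nat \<Rightarrow> complex) \<Rightarrow> (nat \<Rightarrow> complex) \<Rightarrow> nat \<Rightarrow> complex" where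
  "bs \<alpha> \<beta> \<gamma> z M y t 0 = 0"
| "bs \<alpha> \<beta> \<gamma> z M y t (Suc 0) = (y M - of_real (jac_w \<alpha> \<beta> M) * t (Suc M)) / of_real (jac_w \<alpha> \<beta> (M - 1))"
| "bs \<alpha> \<beta> \<gamma> z M y t (Suc (Suc j)) = (y (M - 1 - j) - dd \<gamma> z (M - 1 - j) * bs \<alpha> \<beta> \<gamma> z M y t (Suc j)
      - of_real (jac_w \<alpha> \<beta> (M - 1 - j)) * bs \<alpha> \<beta> \<gamma> z M y t j) / of_real (jac_w \<alpha> \<beta> (M - 2 - j))"

context
  fixes \<alpha> \<beta> \<gamma> :: real and z :: complex
  assumes bpos: "\<beta> > 0" and gpos: "\<gamma> > 0" and abpos: "\<alpha> + \<beta> > 0"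
begin

lemma bs_bound: "\<exists>C\<ge>0. \<forall>y t. y \<in> l2 \<longrightarrow> t \<in> l2 \<longrightarrow> cmod (bs \<alpha> \<beta> \<gamma> z M y t j) \<le> C * (l2norm y + l2norm t)"
proof (induction j rule: less_induct)
  case (less j)
  show ?case
  proof (cases j)
    case 0 thus ?thesis by (intro exI[of _ 0]) (auto intro: add_nonneg_nonneg l2norm_nonneg)
  next
    case (Suc j')
    show ?thesis
    proof (cases j')
      case 0
      define C where "C = (1 + jac_w \<alpha> \<beta> M) / jac_w \<alpha> \<beta> (M - 1)"
      have wp: "jac_w \<alpha> \<beta> (M - 1) > 0" "jac_w \<alpha> \<beta> M > 0" using jw_pos[OF bpos gpos abpos] by auto
      show ?thesis
      proof (intro exI[of _ C] conjI allI impI)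
        show "C \<ge> 0" using wp by (simp add: C_def)
        fix y t :: "nat \<Rightarrow> complex" assume y: "y \<in> l2" and t: "t \<in> l2"
        have "cmod (y M - of_real (jac_w \<alpha> \<beta> M) * t (Suc M)) \<le> cmod (y M) + jac_w \<alpha> \<beta> M * cmod (t (Suc M))"
          using norm_triangle_ineq4[of "y M" "of_real (jac_w \<alpha> \<beta> M) * t (Suc M)"] wp by (simp add: norm_mult)
        also have "\<dots> \<le> l2norm y + jac_w \<alpha> \<beta> M * l2norm t"
          using l2_coord_le[OF y] l2_coord_le[OF t] wp by (intro add_mono mult_left_mono) auto
        also have "\<dots> \<le> (1 + jac_w \<alpha> \<beta> M) * (l2norm y + l2norm t)"
          using l2norm_nonneg[OF y] l2norm_nonneg[OF t] wp by (simp add: algebra_simps)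
        finally have "cmod (y M - of_real (jac_w \<alpha> \<beta> M) * t (Suc M)) / jac_w \<alpha> \<beta> (M - 1) \<le> C * (l2norm y + l2norm t)"
          using wp by (simp add: C_def divide_right_mono field_simps)
        thus "cmod (bs \<alpha> \<beta> \<gamma> z M y t j) \<le> C * (l2norm y + l2norm t)"
          using Suc 0 wp by (simp add: norm_divide)
      qed
    next
      case (Suc j'')
      have jj: "j = Suc (Suc j'')" using \<open>j = Suc j'\<close> Suc by simp
      obtain C1 where C1: "C1 \<ge> 0" "\<forall>y t. y \<in> l2 \<longrightarrow> t \<in> l2 \<longrightarrow> cmod (bs \<alpha> \<beta> \<gamma> z M y t (Suc j'')) \<le> C1 * (l2norm y + l2norm t)"
        using less.IH[of "Suc j''"] jj by auto
      obtain C0 where C0: "C0 \<ge> 0" "\<forall>y t. y \<in> l2 \<longrightarrow> t \<in> l2 \<longrightarrow> cmod (bs \<alpha> \<beta> \<gamma> z M y t j'') \<le> C0 * (l2norm y + l2norm t)"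
        using less.IH[of "j''"] jj by auto
      define m where "m = M - 1 - j''"
      define W where "W = jac_w \<alpha> \<beta> (M - 2 - j'')"
      define C where "C = (1 + cmod (dd \<gamma> z m) * C1 + jac_w \<alpha> \<beta> m * C0) / W"
      have wp: "W > 0" "jac_w \<alpha> \<beta> m > 0" using jw_pos[OF bpos gpos abpos] by (auto simp: W_def)
      show ?thesis
      proof (intro exI[of _ C] conjI allI impI)
        show "C \<ge> 0" using wp C1 C0 by (simp add: C_def)
        fix y t :: "nat \<Rightarrow> complex" assume y: "y \<in> l2" and t: "t \<in> l2"
        define Y where "Y = l2norm y + l2norm t"
        have Y0: "Y \<ge> 0" using l2norm_nonneg[OF y] l2norm_nonneg[OF t] by (simp add: Y_def)
        have b1: "cmod (bs \<alpha> \<beta> \<gamma> z M y t (Suc j'')) \<le> C1 * Y" using C1 y t by (simp add: Y_def)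
        have b0: "cmod (bs \<alpha> \<beta> \<gamma> z M y t j'') \<le> C0 * Y" using C0 y t by (simp add: Y_def)
        have "cmod (y m - dd \<gamma> z m * bs \<alpha> \<beta> \<gamma> z M y t (Suc j'') - of_real (jac_w \<alpha> \<beta> m) * bs \<alpha> \<beta> \<gamma> z M y t j'')
            \<le> cmod (y m) + cmod (dd \<gamma> z m) * cmod (bs \<alpha> \<beta> \<gamma> z M y t (Suc j'')) + jac_w \<alpha> \<beta> m * cmod (bs \<alpha> \<beta> \<gamma> z M y t j'')"
          using wp norm_triangle_ineq4[of "y m - dd \<gamma> z m * bs \<alpha> \<beta> \<gamma> z M y t (Suc j'')" "of_real (jac_w \<alpha> \<beta> m) * bs \<alpha> \<beta> \<gamma> z M y t j''"]
            norm_triangle_ineq4[of "y m" "dd \<gamma> z m * bs \<alpha> \<beta> \<gamma> z M y t (Suc j'')"]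
          by (simp add: norm_mult)
        also have "\<dots> \<le> Y + cmod (dd \<gamma> z m) * (C1 * Y) + jac_w \<alpha> \<beta> m * (C0 * Y)"
          using l2_coord_le[OF y, of m] l2norm_nonneg[OF t] b1 b0 wp
          by (intro add_mono mult_left_mono) (auto simp: Y_def)
        also have "\<dots> = (1 + cmod (dd \<gamma> z m) * C1 + jac_w \<alpha> \<beta> m * C0) * Y" by (simp add: algebra_simps)
        finally have "cmod (y m - dd \<gamma> z m * bs \<alpha> \<beta> \<gamma> z M y t (Suc j'') - of_real (jac_w \<alpha> \<beta> m) * bs \<alpha> \<beta> \<gamma> z M y t j'') / W \<le> C * Y"
          using wp by (simp add: C_def divide_right_mono field_simps)
        thus "cmod (bs \<alpha> \<beta> \<gamma> z M y t j) \<le> C * (l2norm y + l2norm t)"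
          unfolding jj using wp by (simp add: norm_divide m_def W_def Y_def)
      qed
    qed
  qed
qed

lemma bs_rows:
  assumes M1: "M \<ge> 1" and n1: "1 \<le> n" and nM: "n \<le> M"
  shows "res \<alpha> \<beta> \<gamma> z (\<lambda>n. if M < n then t n else bs \<alpha> \<beta> \<gamma> z M y t (M - n)) n = y n"
proof -
  define x where "x = (\<lambda>n. if M < n then t n else bs \<alpha> \<beta> \<gamma> z M y t (M - n))"
  have wnz: "complex_of_real (jac_w \<alpha> \<beta> k) \<noteq> 0" for k using jw_pos[OF bpos gpos abpos, of k] by simp
  show ?thesis
  proof (cases "n = M")
    case True
    have "M - (M - 1) = Suc 0" "\<not> M < M - 1" using M1 by auto
    hence x1: "x (n - 1) = bs \<alpha> \<beta> \<gamma> z M y t (Suc 0)" using True unfolding x_def by simp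
    have x2: "x n = 0" using True by (simp add: x_def)
    have x3: "x (Suc n) = t (Suc M)" using True by (simp add: x_def)
    have "res \<alpha> \<beta> \<gamma> z x n = of_real (jac_w \<alpha> \<beta> (M - 1)) * bs \<alpha> \<beta> \<gamma> z M y t (Suc 0) + of_real (jac_w \<alpha> \<beta> M) * t (Suc M)"
      unfolding res_eq using x1 x2 x3 n1 True by simp
    also have "\<dots> = y M" using wnz[of "M - 1"] by simp
    finally show ?thesis using True by (simp add: x_def)
  next
    case False
    define j where "j = M - 1 - n"
    have nj: "n = M - 1 - j" "M - n = Suc j" "M - (n - 1) = Suc (Suc j)" "M - Suc n = j" "n - 1 = M - 2 - j"
      using False nM n1 by (auto simp: j_def)
    have nl: "\<not> M < n - 1" using nM by simp
    have x1: "x (n - 1) = bs \<alpha> \<beta> \<gamma> z M y t (Suc (Suc j))"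
      unfolding x_def by (simp only: if_not_P[OF nl] nj(3))
    have x2: "x n = bs \<alpha> \<beta> \<gamma> z M y t (Suc j)" using nM nj(2) by (simp add: x_def)
    have x3: "x (Suc n) = bs \<alpha> \<beta> \<gamma> z M y t j" using nM False nj(4) by (simp add: x_def)
    have "res \<alpha> \<beta> \<gamma> z x n = of_real (jac_w \<alpha> \<beta> (n - 1)) * bs \<alpha> \<beta> \<gamma> z M y t (Suc (Suc j))
        + dd \<gamma> z n * bs \<alpha> \<beta> \<gamma> z M y t (Suc j) + of_real (jac_w \<alpha> \<beta> n) * bs \<alpha> \<beta> \<gamma> z M y t j"
      unfolding res_eq using x1 x2 x3 n1 by simp
    also have "of_real (jac_w \<alpha> \<beta> (n - 1)) * bs \<alpha> \<beta> \<gamma> z M y t (Suc (Suc j))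
        = y n - dd \<gamma> z n * bs \<alpha> \<beta> \<gamma> z M y t (Suc j) - of_real (jac_w \<alpha> \<beta> n) * bs \<alpha> \<beta> \<gamma> z M y t j"
      using wnz[of "n - 1"] unfolding bs.simps(3) nj(5)[symmetric] nj(1)[symmetric] by simp
    finally show ?thesis by (simp add: x_def)
  qed
qed

lemma solve_rows1:
  "\<exists>C. \<forall>y\<in>l2. \<exists>x\<in>l2. (\<forall>n\<ge>1. res \<alpha> \<beta> \<gamma> z x n = y n) \<and> l2norm x \<le> C * l2norm y"
proof -
  obtain N0 where "TC \<alpha> \<beta> \<gamma> z N0" using TC_exists[OF bpos gpos abpos] by blast
  define N where "N = max N0 2"
  have tc: "TC \<alpha> \<beta> \<gamma> z N" by (rule TC_mono[OF \<open>TC \<alpha> \<beta> \<gamma> z N0\<close>]) (simp add: N_def)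
  have N2: "N \<ge> 2" by (simp add: N_def)
  define M where "M = N - 1"
  have M1: "M \<ge> 1" and NM: "N = Suc M" using N2 by (auto simp: M_def)
  have "\<forall>j. \<exists>C\<ge>0. \<forall>y t. y \<in> l2 \<longrightarrow> t \<in> l2 \<longrightarrow> cmod (bs \<alpha> \<beta> \<gamma> z M y t j) \<le> C * (l2norm y + l2norm t)"
    using bs_bound by blast
  then obtain Cf where Cf: "\<And>j. Cf j \<ge> 0" "\<And>j y t. y \<in> l2 \<Longrightarrow> t \<in> l2 \<Longrightarrow> cmod (bs \<alpha> \<beta> \<gamma> z M y t j) \<le> Cf j * (l2norm y + l2norm t)"
    by metis
  define CS where "CS = (\<Sum>j<Suc M. Cf j)"
  have CS0: "CS \<ge> 0" unfolding CS_def using Cf(1) by (simp add: sum_nonneg)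
  show ?thesis
  proof (intro exI[of _ "3 * CS + 2"] ballI)
    fix y assume y: "y \<in> l2"
    obtain t where t: "t \<in> l2" "\<forall>n<N. t n = 0" "\<forall>n\<ge>N. res \<alpha> \<beta> \<gamma> z t n = y n" "l2norm t \<le> 2 * l2norm y"
      using tail_exists[OF bpos gpos abpos tc _ y] N2 by auto
    define x where "x = (\<lambda>n. if M < n then t n else bs \<alpha> \<beta> \<gamma> z M y t (M - n))"
    define xf where "xf = (\<lambda>n. if n \<le> M then bs \<alpha> \<beta> \<gamma> z M y t (M - n) else 0)"
    define xt where "xt = (\<lambda>n. if M < n then t n else 0)"
    define Y where "Y = l2norm y + l2norm t"
    have Y3: "Y \<le> 3 * l2norm y" using t(4) by (simp add: Y_def)
    have Y0: "Y \<ge> 0" using l2norm_nonneg[OF y] l2norm_nonneg[OF t(1)] by (simp add: Y_def)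
    have xsplit: "x = (\<lambda>n. xf n + xt n)" by (rule ext) (simp add: x_def xf_def xt_def)
    have xt: "xt \<in> l2 \<and> l2norm xt \<le> 1 * l2norm t"
      by (rule l2_comp_le[OF t(1)]) (auto simp: xt_def)
    have xf: "xf \<in> l2 \<and> l2norm xf \<le> sqrt (\<Sum>n<Suc M. (cmod (xf n))\<^sup>2)"
      by (rule l2_finite) (simp add: xf_def)
    have "sqrt (\<Sum>n<Suc M. (cmod (xf n))\<^sup>2) = L2_set (\<lambda>n. cmod (xf n)) {..<Suc M}"
      by (simp add: L2_set_def)
    also have "\<dots> \<le> (\<Sum>n<Suc M. cmod (xf n))" by (rule L2_set_le_sum) simp
    also have "\<dots> \<le> (\<Sum>n<Suc M. Cf (M - n) * Y)"
    proof (rule sum_mono)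
      fix n assume "n \<in> {..<Suc M}"
      hence "n \<le> M" by simp
      thus "cmod (xf n) \<le> Cf (M - n) * Y" using Cf(2)[OF y t(1)] by (simp add: xf_def Y_def)
    qed
    also have "\<dots> = (\<Sum>n<Suc M. Cf (M - n)) * Y" by (simp only: sum_distrib_right)
    also have "(\<Sum>n<Suc M. Cf (M - n)) = CS"
      unfolding CS_def by (rule sum.reindex_bij_witness[of _ "\<lambda>j. M - j" "\<lambda>n. M - n"]) auto
    finally have xfb: "l2norm xf \<le> CS * Y" using xf by linarith
    have xl: "x \<in> l2 \<and> l2norm x \<le> l2norm xf + l2norm xt"
      unfolding xsplit by (rule l2_add) (use xf xt in auto)
    have "l2norm x \<le> CS * Y + l2norm t" using xl xfb xt by linarith
    also have "\<dots> \<le> CS * (3 * l2norm y) + 2 * l2norm y"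
      using Y3 CS0 t(4) by (intro add_mono mult_left_mono) auto
    finally have bound: "l2norm x \<le> (3 * CS + 2) * l2norm y" by (simp add: algebra_simps)
    have rows: "res \<alpha> \<beta> \<gamma> z x n = y n" if n: "n \<ge> 1" for n
    proof (cases "n \<le> M")
      case True thus ?thesis unfolding x_def using bs_rows[OF M1 n True] by simp
    next
      case False
      hence nN: "n \<ge> N" using NM by simp
      have agree: "x k = t k" if "k \<ge> M" for k
      proof (cases "M < k")
        case True thus ?thesis by (simp add: x_def)
      next
        case False hence "k = M" using that by simp
        thus ?thesis using t(2) NM by (simp add: x_def)
      qed
      have "res \<alpha> \<beta> \<gamma> z x n = res \<alpha> \<beta> \<gamma> z t n"
        unfolding res_eq using agree[of "n - 1"] agree[of n] agree[of "Suc n"] False by simp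
      thus ?thesis using t(3) nN by simp
    qed
    show "\<exists>x\<in>l2. (\<forall>n\<ge>1. res \<alpha> \<beta> \<gamma> z x n = y n) \<and> l2norm x \<le> (3 * CS + 2) * l2norm y"
      using xl rows bound by blast
  qed
qed

end



lemma l2norm_zero_fun: "l2norm (\<lambda>_. 0) = 0"
  by (simp add: l2norm_def)

context
  fixes \<alpha> \<beta> \<gamma> :: real
  assumes bpos: "\<beta> > 0" and gpos: "\<gamma> > 0" and abpos: "\<alpha> + \<beta> > 0"
begin

lemma zero_prop:
  assumes g0: "\<And>n. n \<ge> M \<Longrightarrow> g n = 0" and rows: "\<And>n. n \<ge> 1 \<Longrightarrow> res \<alpha> \<beta> \<gamma> z g n = 0"
  shows "g = (\<lambda>_. 0)"
proof -
  have "\<forall>n\<ge>M - j. g n = 0" for j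
  proof (induction j)
    case 0 thus ?case using g0 by simp
  next
    case (Suc j)
    show ?case
    proof (cases "M - j = 0")
      case True thus ?thesis using Suc.IH by simp
    next
      case False
      define k where "k = M - j"
      have k1: "k \<ge> 1" using False by (simp add: k_def)
      have gk: "g k = 0" "g (Suc k) = 0" using Suc.IH by (auto simp: k_def)
      have "res \<alpha> \<beta> \<gamma> z g k = 0" by (rule rows[OF k1])
      hence "complex_of_real (jac_w \<alpha> \<beta> (k - 1)) * g (k - 1) = 0"
        unfolding res_eq using k1 gk by simp
      moreover have "complex_of_real (jac_w \<alpha> \<beta> (k - 1)) \<noteq> 0"
        using jw_pos[OF bpos gpos abpos, of "k - 1"] by simp
      ultimately have gk1: "g (k - 1) = 0" by simp
      have "M - Suc j = k - 1" by (simp add: k_def)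
      show ?thesis
      proof (intro allI impI)
        fix n assume "M - Suc j \<le> n"
        hence "n = k - 1 \<or> n \<ge> k" using k1 \<open>M - Suc j = k - 1\<close> by linarith
        thus "g n = 0" using gk1 Suc.IH by (auto simp: k_def)
      qed
    qed
  qed
  from this[of M] show ?thesis by (intro ext) simp
qed

lemma res_u_Suc: "res \<alpha> \<beta> \<gamma> z (jac_eigvec \<alpha> \<beta> \<gamma> z) (Suc m) = 0"
  unfolding res_def using row_Suc[OF bpos gpos abpos] by simp

lemma res_u_0: "res \<alpha> \<beta> \<gamma> z (jac_eigvec \<alpha> \<beta> \<gamma> z) 0 = of_real (\<gamma> * coef \<alpha> \<beta> \<gamma> 1) * FJ \<alpha> \<beta> \<gamma> z"
  unfolding res_def using row_0[OF bpos gpos abpos] by simp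

lemma r0_nz: "FJ \<alpha> \<beta> \<gamma> z \<noteq> 0 \<Longrightarrow> res \<alpha> \<beta> \<gamma> z (jac_eigvec \<alpha> \<beta> \<gamma> z) 0 \<noteq> 0"
  unfolding res_u_0 using coef_nz[OF bpos gpos abpos, of 1] gpos by simp

lemma uniq:
  assumes F: "FJ \<alpha> \<beta> \<gamma> z \<noteq> 0" and h: "h \<in> l2" and hr: "\<And>n. res \<alpha> \<beta> \<gamma> z h n = 0"
  shows "h = (\<lambda>_. 0)"
proof -
  define u where "u = jac_eigvec \<alpha> \<beta> \<gamma> z"
  obtain N0 where N0: "\<forall>n\<ge>N0. u n \<noteq> 0" using u_ev_nz[OF bpos gpos abpos] unfolding u_def by blast
  obtain N1 where N1: "TC \<alpha> \<beta> \<gamma> z N1" using TC_exists[OF bpos gpos abpos] by blast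
  define N where "N = Suc (max N0 N1)"
  have tc: "TC \<alpha> \<beta> \<gamma> z N" by (rule TC_mono[OF N1]) (simp add: N_def)
  have uN: "u (N - 1) \<noteq> 0" using N0 by (simp add: N_def)
  have ul: "u \<in> l2" unfolding u_def by (rule u_l2[OF bpos gpos abpos])
  define c where "c = h (N - 1) / u (N - 1)"
  define g where "g = (\<lambda>n. h n - c * u n)"
  have cu: "(\<lambda>n. c * u n) \<in> l2" using l2_scale[OF ul] by blast
  have gl: "g \<in> l2" unfolding g_def using l2_diff[OF h cu] by blast
  have gN: "g (N - 1) = 0" using uN by (simp add: g_def c_def)
  have gr: "res \<alpha> \<beta> \<gamma> z g n = 0" if n1: "n \<ge> 1" for n
  proof -
    obtain m where "n = Suc m" using n1 by (cases n) auto
    thus ?thesis unfolding g_def res_lin using hr res_u_Suc unfolding u_def by simp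
  qed
  have "\<forall>n\<ge>N. g n = 0"
    by (rule max_principle[OF bpos gpos abpos gl _ tc gN]) (use gr in \<open>auto simp: N_def\<close>)
  hence "\<And>n. n \<ge> N - 1 \<Longrightarrow> g n = 0" using gN by (metis le_antisym not_less_eq_eq Suc_diff_1 N_def zero_less_Suc)
  hence g0: "g = (\<lambda>_. 0)" by (intro zero_prop[where M="N - 1" and z=z]) (auto intro: gr)
  have "res \<alpha> \<beta> \<gamma> z g 0 = res \<alpha> \<beta> \<gamma> z h 0 - c * res \<alpha> \<beta> \<gamma> z u 0" unfolding g_def by (rule res_lin)
  hence "c * res \<alpha> \<beta> \<gamma> z u 0 = 0" using hr[of 0] g0 by (simp add: res_eq)
  hence c0: "c = 0" using r0_nz[OF F] by (simp add: u_def)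
  show ?thesis using g0 c0 by (simp add: g_def)
qed

lemma solve_full:
  assumes F: "FJ \<alpha> \<beta> \<gamma> z \<noteq> 0"
  shows "\<exists>C. \<forall>y\<in>l2. \<exists>x\<in>l2. (\<forall>n. res \<alpha> \<beta> \<gamma> z x n = y n) \<and> l2norm x \<le> C * l2norm y"
proof -
  obtain C1 where C1: "\<forall>y\<in>l2. \<exists>x\<in>l2. (\<forall>n\<ge>1. res \<alpha> \<beta> \<gamma> z x n = y n) \<and> l2norm x \<le> C1 * l2norm y"
    using solve_rows1[OF bpos gpos abpos] by blast
  define u where "u = jac_eigvec \<alpha> \<beta> \<gamma> z"
  have ul: "u \<in> l2" unfolding u_def by (rule u_l2[OF bpos gpos abpos])
  define r0 where "r0 = res \<alpha> \<beta> \<gamma> z u 0"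
  have r0: "r0 \<noteq> 0" unfolding r0_def u_def by (rule r0_nz[OF F])
  define D where "D = cmod (dd \<gamma> z 0) + jac_w \<alpha> \<beta> 0"
  have D0: "D \<ge> 0" using jw_pos[OF bpos gpos abpos, of 0] by (simp add: D_def)
  define K where "K = (D * C1 + 1) / cmod r0"
  show ?thesis
  proof (intro exI[of _ "C1 + K * l2norm u"] ballI)
    fix y assume y: "y \<in> l2"
    obtain x1 where x1: "x1 \<in> l2" "\<forall>n\<ge>1. res \<alpha> \<beta> \<gamma> z x1 n = y n" "l2norm x1 \<le> C1 * l2norm y"
      using C1 y by blast
    define \<rho> where "\<rho> = res \<alpha> \<beta> \<gamma> z x1 0 - y 0"
    define x where "x = (\<lambda>n. x1 n - (\<rho> / r0) * u n)"
    have rows: "res \<alpha> \<beta> \<gamma> z x n = y n" for n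
    proof (cases n)
      case 0 thus ?thesis unfolding x_def res_lin using r0 by (simp add: \<rho>_def r0_def)
    next
      case (Suc m) thus ?thesis unfolding x_def res_lin using x1(2) res_u_Suc by (simp add: u_def)
    qed
    have r_bound: "cmod (res \<alpha> \<beta> \<gamma> z x1 0) \<le> D * l2norm x1"
    proof -
      have "res \<alpha> \<beta> \<gamma> z x1 0 = dd \<gamma> z 0 * x1 0 + of_real (jac_w \<alpha> \<beta> 0) * x1 (Suc 0)" by (simp add: res_eq)
      hence "cmod (res \<alpha> \<beta> \<gamma> z x1 0) \<le> cmod (dd \<gamma> z 0) * cmod (x1 0) + jac_w \<alpha> \<beta> 0 * cmod (x1 (Suc 0))"
        using norm_triangle_ineq[of "dd \<gamma> z 0 * x1 0" "of_real (jac_w \<alpha> \<beta> 0) * x1 (Suc 0)"]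
          jw_pos[OF bpos gpos abpos, of 0] by (simp add: norm_mult)
      also have "\<dots> \<le> cmod (dd \<gamma> z 0) * l2norm x1 + jac_w \<alpha> \<beta> 0 * l2norm x1"
        using l2_coord_le[OF x1(1)] jw_pos[OF bpos gpos abpos, of 0]
        by (intro add_mono mult_left_mono) auto
      finally show ?thesis by (simp add: D_def algebra_simps)
    qed
    have rho_b: "cmod \<rho> \<le> (D * C1 + 1) * l2norm y"
    proof -
      have "cmod \<rho> \<le> cmod (res \<alpha> \<beta> \<gamma> z x1 0) + cmod (y 0)" unfolding \<rho>_def by (rule norm_triangle_ineq4)
      also have "\<dots> \<le> D * (C1 * l2norm y) + l2norm y"
      proof -
        have "D * l2norm x1 \<le> D * (C1 * l2norm y)" using x1(3) D0 by (rule mult_left_mono)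
        thus ?thesis using r_bound l2_coord_le[OF y, of 0] by linarith
      qed
      finally show ?thesis by (simp add: algebra_simps)
    qed
    have su: "(\<lambda>n. (\<rho> / r0) * u n) \<in> l2 \<and> l2norm (\<lambda>n. (\<rho> / r0) * u n) \<le> cmod (\<rho> / r0) * l2norm u"
      by (rule l2_scale[OF ul])
    have xl: "x \<in> l2 \<and> l2norm x \<le> l2norm x1 + l2norm (\<lambda>n. (\<rho> / r0) * u n)"
      unfolding x_def by (rule l2_diff[OF x1(1) conjunct1[OF su]])
    have "cmod (\<rho> / r0) \<le> K * l2norm y"
      using rho_b r0 by (simp add: K_def norm_divide divide_right_mono)
    hence "cmod (\<rho> / r0) * l2norm u \<le> (K * l2norm y) * l2norm u"
      by (intro mult_right_mono l2norm_nonneg[OF ul])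
    hence "l2norm x \<le> C1 * l2norm y + K * l2norm y * l2norm u"
      using xl su x1(3) by linarith
    hence "l2norm x \<le> (C1 + K * l2norm u) * l2norm y" by (simp add: algebra_simps)
    thus "\<exists>x\<in>l2. (\<forall>n. res \<alpha> \<beta> \<gamma> z x n = y n) \<and> l2norm x \<le> (C1 + K * l2norm u) * l2norm y"
      using xl rows by blast
  qed
qed

end

theorem mainTheorem4:
  fixes \<alpha> \<beta> \<gamma> :: real
  assumes "\<beta> > 0" and "\<gamma> > 0" and "\<alpha> + \<beta> > 0"
  shows "(\<forall>z. z \<in> jac_spectrum \<alpha> \<beta> \<gamma> \<longleftrightarrow> FJ \<alpha> \<beta> \<gamma> z = 0) \<and>
         (\<forall>z. jac_eigenvalue \<alpha> \<beta> \<gamma> z \<longrightarrow>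
              jac_eigvec \<alpha> \<beta> \<gamma> z \<in> jac_dom \<alpha> \<beta> \<gamma> \<and>
              jac_eigvec \<alpha> \<beta> \<gamma> z \<noteq> (\<lambda>_. 0) \<and>
              (\<forall>n. jac_op \<alpha> \<beta> \<gamma> (jac_eigvec \<alpha> \<beta> \<gamma> z) n = z * jac_eigvec \<alpha> \<beta> \<gamma> z n))"
proof -
  note A = assms
  have eig_of_zero: "jac_eigvec \<alpha> \<beta> \<gamma> z \<in> jac_dom \<alpha> \<beta> \<gamma> \<and> jac_eigvec \<alpha> \<beta> \<gamma> z \<noteq> (\<lambda>_. 0) \<and>
      (\<forall>n. jac_op \<alpha> \<beta> \<gamma> (jac_eigvec \<alpha> \<beta> \<gamma> z) n = z * jac_eigvec \<alpha> \<beta> \<gamma> z n)"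
    if F: "FJ \<alpha> \<beta> \<gamma> z = 0" for z
  proof -
    define u where "u = jac_eigvec \<alpha> \<beta> \<gamma> z"
    have ul: "u \<in> l2" unfolding u_def by (rule u_l2[OF A])
    have eq: "jac_op \<alpha> \<beta> \<gamma> u n = z * u n" for n
    proof (cases n)
      case 0 thus ?thesis using res_u_0[OF A, of z] F unfolding u_def res_def by simp
    next
      case (Suc m) thus ?thesis using row_Suc[OF A] unfolding u_def by simp
    qed
    have "(\<lambda>n. jac_op \<alpha> \<beta> \<gamma> u n) \<in> l2" unfolding eq using l2_scale[OF ul] by blast
    hence dom: "u \<in> jac_dom \<alpha> \<beta> \<gamma>" using ul by (simp add: jac_dom_def)
    obtain N where "\<forall>n\<ge>N. u n \<noteq> 0" using u_ev_nz[OF A] unfolding u_def by blast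
    hence "u \<noteq> (\<lambda>_. 0)" by (metis order_refl)
    thus ?thesis using dom eq unfolding u_def by blast
  qed
  have part1: "z \<in> jac_spectrum \<alpha> \<beta> \<gamma> \<longleftrightarrow> FJ \<alpha> \<beta> \<gamma> z = 0" for z
  proof
    assume sp: "z \<in> jac_spectrum \<alpha> \<beta> \<gamma>"
    show "FJ \<alpha> \<beta> \<gamma> z = 0"
    proof (rule ccontr)
      assume F: "FJ \<alpha> \<beta> \<gamma> z \<noteq> 0"
      obtain C where C: "\<forall>y\<in>l2. \<exists>x\<in>l2. (\<forall>n. res \<alpha> \<beta> \<gamma> z x n = y n) \<and> l2norm x \<le> C * l2norm y"
        using solve_full[OF A F] by blast
      have surj: "\<forall>y\<in>l2. \<exists>x\<in>jac_dom \<alpha> \<beta> \<gamma>. (\<lambda>n. jac_op \<alpha> \<beta> \<gamma> x n - z * x n) = y"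
      proof
        fix y assume y: "y \<in> l2"
        then obtain x where x: "x \<in> l2" "\<forall>n. res \<alpha> \<beta> \<gamma> z x n = y n" using C by blast
        have jx: "(\<lambda>n. jac_op \<alpha> \<beta> \<gamma> x n) = (\<lambda>n. y n + z * x n)"
          using x(2) by (auto simp: res_def algebra_simps)
        have "(\<lambda>n. y n + z * x n) \<in> l2" using l2_add[OF y conjunct1[OF l2_scale[OF x(1)]]] by blast
        hence "x \<in> jac_dom \<alpha> \<beta> \<gamma>" using x(1) jx by (simp add: jac_dom_def)
        moreover have "(\<lambda>n. jac_op \<alpha> \<beta> \<gamma> x n - z * x n) = y" using x(2) by (auto simp: res_def)
        ultimately show "\<exists>x\<in>jac_dom \<alpha> \<beta> \<gamma>. (\<lambda>n. jac_op \<alpha> \<beta> \<gamma> x n - z * x n) = y" by blast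
      qed
      have bnd: "\<forall>x\<in>jac_dom \<alpha> \<beta> \<gamma>. l2norm x \<le> C * l2norm (\<lambda>n. jac_op \<alpha> \<beta> \<gamma> x n - z * x n)"
      proof
        fix x assume "x \<in> jac_dom \<alpha> \<beta> \<gamma>"
        hence xl: "x \<in> l2" and jl: "(\<lambda>n. jac_op \<alpha> \<beta> \<gamma> x n) \<in> l2" by (auto simp: jac_dom_def)
        define y where "y = (\<lambda>n. jac_op \<alpha> \<beta> \<gamma> x n - z * x n)"
        have yl: "y \<in> l2" unfolding y_def using l2_diff[OF jl conjunct1[OF l2_scale[OF xl]]] by blast
        obtain x' where x': "x' \<in> l2" "\<forall>n. res \<alpha> \<beta> \<gamma> z x' n = y n" "l2norm x' \<le> C * l2norm y"
          using C yl by blast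
        have "(\<lambda>n. x n - x' n) = (\<lambda>_. 0)"
        proof (rule uniq[OF A F])
          show "(\<lambda>n. x n - x' n) \<in> l2" using l2_diff[OF xl x'(1)] by blast
          fix n show "res \<alpha> \<beta> \<gamma> z (\<lambda>n. x n - x' n) n = 0"
            unfolding res_diff using x'(2) by (simp add: y_def res_def)
        qed
        hence "x = x'" by (metis (no_types) eq_iff_diff_eq_0 ext)
        thus "l2norm x \<le> C * l2norm (\<lambda>n. jac_op \<alpha> \<beta> \<gamma> x n - z * x n)" using x'(3) by (simp add: y_def)
      qed
      have "z \<in> jac_resolvent \<alpha> \<beta> \<gamma>" unfolding jac_resolvent_def using surj bnd by blast
      thus False using sp by (simp add: jac_spectrum_def)
    qed
  next
    assume F: "FJ \<alpha> \<beta> \<gamma> z = 0"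
    show "z \<in> jac_spectrum \<alpha> \<beta> \<gamma>"
    proof -
      define u where "u = jac_eigvec \<alpha> \<beta> \<gamma> z"
      have E: "u \<in> jac_dom \<alpha> \<beta> \<gamma>" "u \<noteq> (\<lambda>_. 0)" "\<forall>n. jac_op \<alpha> \<beta> \<gamma> u n = z * u n"
        using eig_of_zero[OF F] unfolding u_def by auto
      have "z \<notin> jac_resolvent \<alpha> \<beta> \<gamma>"
      proof
        assume "z \<in> jac_resolvent \<alpha> \<beta> \<gamma>"
        then obtain C where C: "\<forall>x\<in>jac_dom \<alpha> \<beta> \<gamma>. l2norm x \<le> C * l2norm (\<lambda>n. jac_op \<alpha> \<beta> \<gamma> x n - z * x n)"
          unfolding jac_resolvent_def by blast
        have "l2norm u \<le> C * l2norm (\<lambda>n. jac_op \<alpha> \<beta> \<gamma> u n - z * u n)" using C E(1) by blast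
        also have "(\<lambda>n. jac_op \<alpha> \<beta> \<gamma> u n - z * u n) = (\<lambda>_. 0)" using E(3) by simp
        finally have "l2norm u \<le> 0" by (simp add: l2norm_zero_fun)
        moreover have ul: "u \<in> l2" using E(1) by (simp add: jac_dom_def)
        ultimately have "l2norm u = 0" using l2norm_nonneg[OF ul] by linarith
        hence "u = (\<lambda>_. 0)" by (rule l2_zero[OF ul])
        thus False using E(2) by simp
      qed
      thus ?thesis by (simp add: jac_spectrum_def)
    qed
  qed
  have part2: "FJ \<alpha> \<beta> \<gamma> z = 0" if ev: "jac_eigenvalue \<alpha> \<beta> \<gamma> z" for z
  proof (rule ccontr)
    assume F: "FJ \<alpha> \<beta> \<gamma> z \<noteq> 0"
    obtain x where x: "x \<in> jac_dom \<alpha> \<beta> \<gamma>" "x \<noteq> (\<lambda>_. 0)" "\<forall>n. jac_op \<alpha> \<beta> \<gamma> x n = z * x n"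
      using ev unfolding jac_eigenvalue_def by blast
    have "x = (\<lambda>_. 0)"
      by (rule uniq[OF A F]) (use x in \<open>auto simp: jac_dom_def res_def\<close>)
    thus False using x(2) by simp
  qed
  show ?thesis using part1 part2 eig_of_zero by blast
qed



end
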